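(* For every $\beta>0$ and every $L,M\geq 1$, \begin{equation*} \frac{Z^{+,-}_{\mathcal{R}(L,M),\beta}}{Z^{+,+}_{\mathcal{R}(L,M),\beta}}= \Psi^{0}_{\mathcal R(L,M),\beta,\mathsf{h}^{+,+}_{L,M}}\big[\text{$\mathfrak g^{-}$ is not connected to $\mathfrak g^{+}$ in $\omega$}\big]. \end{equation*} In particular, the surface tension $\tau_{\beta}:=\liminf_{L\to\infty}\liminf_{M\to\infty}\frac{1}{L^{d-1}}\log \frac{Z^{+,+}_{\mathcal{R}(L,M),\beta}}{Z^{+,-}_{\mathcal{R}(L,M),\beta}}$ satisfies $\tau_{\beta}\geq 0$ for every $\beta>0$.
   Context: Fix $g>0$, $a\in\mathbb R$, and let $\mathrm d\rho_{g,a}(t)\propto e^{-gt^4-at^2}\mathrm dt$ on $\mathbb R$. For a finite $\Lambda\subset\mathbb Z^d$ ($d\geq2$) with nearest-neighbour edge set $E(\Lambda)$ and a field $\mathsf h\in\mathbb R^\Lambda$, the $\varphi^4$ partition function is $Z^{\varphi^4}_{\Lambda,\beta,\mathsf h}=\int \exp\big(\beta\sum_{xy\in E(\Lambda)}\varphi_x\varphi_y+\beta\sum_{x\in\Lambda}\mathsf h_x\varphi_x\big)\prod_{x\in\Lambda}\mathrm d\rho_{g,a}(\varphi_x)$. For $L,M\geq1$ let $\mathcal R(L,M)=\{-L,\dots,L\}^{d-1}\times\{-M,\dots,M\}$, its thick boundary $\partial^{\rm thick}\mathcal R(L,M)=\mathcal R(L,M)\setminus\big(\{-L+\log L+1,\dots,L-\log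 L-1\}^{d-1}\times\{-M,\dots,M\}\big)$, its top part $\partial^{\rm thick}_+=\partial^{\rm thick}\mathcal R(L,M)\cap\{x_d\in\{1,\dots,M\}\}$ and bottom part $\partial^{\rm thick}_-=\partial^{\rm thick}\mathcal R(L,M)\cap\{x_d\in\{-M,\dots,0\}\}$. Let $\mathsf h^{+,+}_{L,M}=\mathbbm 1_{\partial^{\rm thick}\mathcal R(L,M)}$ and $\mathsf h^{+,-}_{L,M}=\mathbbm 1_{\partial^{\rm thick}_+}-\mathbbm 1_{\partial^{\rm thick}_-}$, and $Z^{+,\pm}_{\mathcal R(L,M),\beta}:=Z^{\varphi^4}_{\mathcal R(L,M),\beta,\mathsf h^{+,\pm}_{L,M}}$. Let $\mathcal R^{+,-}(L,M)$ be the graph with vertices $\mathcal R(L,M)\cup\{\mathfrak g^+,\mathfrak g^-\}$ (two ghost vertices) and edges $E(\mathcal R(L,M))\cup\{x\mathfrak g^+:x\in\partial^{\rm thick}_+\}\cup\{x\mathfrak g^-:x\in\partial^{\rm thick}_-\}$. The free $\varphi^4$ random cluster measure $\Psi^{0}_{\mathcal R(L,M),\beta,\mathsf{h}^{+,+}_{L,M}}$ is the probability measure on pairs $(\omega,\mathsf a)\in\{0,1\}^{E(\mathcal R^{+,-}(L,M))}\times(\mathbb R^+)^{\mathcal R(L,M)}$ with density proportional to $\prod_{xy\in E(\mathcal R(L,M))}\sqrt{1-p_{xy}}\big(\tfrac{p_{xy}}{1-p_{xy}}\big)^{\omega_{xy}}\prod_{x\mathfrak g^{\pm}}\sqrt{1-p_{x\mathfrak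 g}}\big(\tfrac{p_{x\mathfrak g}}{1-p_{x\mathfrak g}}\big)^{\omega_{x\mathfrak g^\pm}}\,2^{\tilde k(\omega)}\prod_{x}\mathrm d\rho_{g,a}(\mathsf a_x)$, where $\mathrm d\rho_{g,a}(\mathsf a_x)$ here denotes the pushforward of $\rho_{g,a}$ under $t\mapsto|t|$, $p_{xy}=1-e^{-2\beta\mathsf a_x\mathsf a_y}$, $p_{x\mathfrak g}=1-e^{-2\beta\mathsf h^{+,+}_{L,M}(x)\mathsf a_x}$, and $\tilde k(\omega)$ is the number of connected components of $\omega$ after identifying $\mathfrak g^+$ and $\mathfrak g^-$. (After identifying the two ghosts this is the usual free $\varphi^4$ random cluster measure with field $\mathsf h^{+,+}_{L,M}$, i.e. an Ising random cluster model with couplings $\beta\mathsf a_x\mathsf a_y$ in the random environment $\mathsf a\sim|\varphi|$.) *)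

theory Defs
  imports "HOL-Analysis.Analysis"
begin

text \<open>Points of Z^d are functions nat => int vanishing outside coordinates 0..d-1;
  the paper's coordinate x_d is coordinate d-1 here.\<close>

definition box :: "nat \<Rightarrow> nat \<Rightarrow> nat \<Rightarrow> (nat \<Rightarrow> int) set" where
  "box d L M = {x. (\<forall>i<d-1. - int L \<le> x i \<and> x i \<le> int L)
                  \<and> - int M \<le> x (d-1) \<and> x (d-1) \<le> int M \<and> (\<forall>i\<ge>d. x i = 0)}"

definition nn_edges :: "nat \<Rightarrow> (nat \<Rightarrow> int) set \<Rightarrow> (nat \<Rightarrow> int) set set" where
  "nn_edges d \<Lambda> = {{x, y} | x y. x \<in> \<Lambda> \<and> y \<in> \<Lambda> \<and> (\<Sum>i<d. \<bar>x i - y i\<bar>) = 1}"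

definition thick_bdry :: "nat \<Rightarrow> nat \<Rightarrow> nat \<Rightarrow> (nat \<Rightarrow> int) set" where
  "thick_bdry d L M = box d L M - {x. \<forall>i<d-1.
       - real L + ln (real L) + 1 \<le> real_of_int (x i) \<and> real_of_int (x i) \<le> real L - ln (real L) - 1}"

definition thick_top :: "nat \<Rightarrow> nat \<Rightarrow> nat \<Rightarrow> (nat \<Rightarrow> int) set" where
  "thick_top d L M = thick_bdry d L M \<inter> {x. 1 \<le> x (d-1) \<and> x (d-1) \<le> int M}"

definition thick_bot :: "nat \<Rightarrow> nat \<Rightarrow> nat \<Rightarrow> (nat \<Rightarrow> int) set" where
  "thick_bot d L M = thick_bdry d L M \<inter> {x. - int M \<le> x (d-1) \<and> x (d-1) \<le> 0}"

definition h_pp :: "nat \<Rightarrow> nat \<Rightarrow> nat \<Rightarrow> (nat \<Rightarrow> int) \<Rightarrow> real" where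
  "h_pp d L M x = (if x \<in> thick_bdry d L M then 1 else 0)"

definition h_pm :: "nat \<Rightarrow> nat \<Rightarrow> nat \<Rightarrow> (nat \<Rightarrow> int) \<Rightarrow> real" where
  "h_pm d L M x = (if x \<in> thick_top d L M then 1 else 0) - (if x \<in> thick_bot d L M then 1 else 0)"

definition rho :: "real \<Rightarrow> real \<Rightarrow> real measure" where
  "rho g a = density lborel (\<lambda>t. ennreal (exp (- g * t ^ 4 - a * t ^ 2) /
       (\<integral>s. exp (- g * s ^ 4 - a * s ^ 2) \<partial>lborel)))"

definition Z_phi4 :: "nat \<Rightarrow> real \<Rightarrow> real \<Rightarrow> (nat \<Rightarrow> int) set \<Rightarrow> real
    \<Rightarrow> ((nat \<Rightarrow> int) \<Rightarrow> real) \<Rightarrow> real" where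
  "Z_phi4 d g a \<Lambda> \<beta> h =
     (\<integral>\<phi>. exp (\<beta> * (\<Sum>e\<in>nn_edges d \<Lambda>. \<Prod>v\<in>e. \<phi> v) + \<beta> * (\<Sum>x\<in>\<Lambda>. h x * \<phi> x))
        \<partial>(PiM \<Lambda> (\<lambda>_. rho g a)))"

definition Z_pp :: "nat \<Rightarrow> real \<Rightarrow> real \<Rightarrow> nat \<Rightarrow> nat \<Rightarrow> real \<Rightarrow> real" where
  "Z_pp d g a L M \<beta> = Z_phi4 d g a (box d L M) \<beta> (h_pp d L M)"

definition Z_pm :: "nat \<Rightarrow> real \<Rightarrow> real \<Rightarrow> nat \<Rightarrow> nat \<Rightarrow> real \<Rightarrow> real" where
  "Z_pm d g a L M \<beta> = Z_phi4 d g a (box d L M) \<beta> (h_pm d L M)"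

datatype vtx = V "nat \<Rightarrow> int" | Gp | Gm

definition ghost_edges :: "nat \<Rightarrow> nat \<Rightarrow> nat \<Rightarrow> vtx set set" where
  "ghost_edges d L M = (\<lambda>e. V ` e) ` nn_edges d (box d L M)
      \<union> (\<lambda>x. {V x, Gp}) ` thick_top d L M \<union> (\<lambda>x. {V x, Gm}) ` thick_bot d L M"

definition merge_g :: "vtx \<Rightarrow> vtx" where
  "merge_g v = (if v = Gm then Gp else v)"

definition merged_rel :: "vtx set set \<Rightarrow> (vtx \<times> vtx) set" where
  "merged_rel \<omega> = {(merge_g u, merge_g v) | u v. {u, v} \<in> \<omega>}"

text \<open>Number of connected components of omega after identifying the two ghosts.\<close>
definition k_tilde :: "nat \<Rightarrow> nat \<Rightarrow> nat \<Rightarrow> vtx set set \<Rightarrow> nat" where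
  "k_tilde d L M \<omega> = card ((V ` box d L M \<union> {Gp}) // ((merged_rel \<omega>)\<^sup>*))"

definition open_rel :: "vtx set set \<Rightarrow> (vtx \<times> vtx) set" where
  "open_rel \<omega> = {(u, v). {u, v} \<in> \<omega>}"

definition ghosts_connected :: "vtx set set \<Rightarrow> bool" where
  "ghosts_connected \<omega> \<longleftrightarrow> (Gm, Gp) \<in> (open_rel \<omega>)\<^sup>*"

definition edge_factor :: "real \<Rightarrow> bool \<Rightarrow> real" where
  "edge_factor p b = sqrt (1 - p) * (if b then p / (1 - p) else 1)"

definition rc_weight :: "nat \<Rightarrow> nat \<Rightarrow> nat \<Rightarrow> real
     \<Rightarrow> vtx set set \<Rightarrow> ((nat \<Rightarrow> int) \<Rightarrow> real) \<Rightarrow> real" where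
  "rc_weight d L M \<beta> \<omega> aa =
     (\<Prod>e\<in>nn_edges d (box d L M).
         edge_factor (1 - exp (- 2 * \<beta> * (\<Prod>v\<in>e. aa v))) (V ` e \<in> \<omega>))
   * (\<Prod>x\<in>thick_top d L M.
         edge_factor (1 - exp (- 2 * \<beta> * h_pp d L M x * aa x)) ({V x, Gp} \<in> \<omega>))
   * (\<Prod>x\<in>thick_bot d L M.
         edge_factor (1 - exp (- 2 * \<beta> * h_pp d L M x * aa x)) ({V x, Gm} \<in> \<omega>))
   * 2 ^ k_tilde d L M \<omega>"

definition rc_base :: "nat \<Rightarrow> real \<Rightarrow> real \<Rightarrow> nat \<Rightarrow> nat
     \<Rightarrow> (vtx set set \<times> ((nat \<Rightarrow> int) \<Rightarrow> real)) measure" where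
  "rc_base d g a L M = count_space (Pow (ghost_edges d L M))
      \<Otimes>\<^sub>M PiM (box d L M) (\<lambda>_. distr (rho g a) borel abs)"

definition Psi0 :: "nat \<Rightarrow> real \<Rightarrow> real \<Rightarrow> nat \<Rightarrow> nat \<Rightarrow> real
     \<Rightarrow> (vtx set set \<times> ((nat \<Rightarrow> int) \<Rightarrow> real)) measure" where
  "Psi0 d g a L M \<beta> = density (rc_base d g a L M)
     (\<lambda>(\<omega>, aa). ennreal (rc_weight d L M \<beta> \<omega> aa /
        (\<integral>(\<omega>', aa'). rc_weight d L M \<beta> \<omega>' aa' \<partial>(rc_base d g a L M))))"

definition surface_tension :: "nat \<Rightarrow> real \<Rightarrow> real \<Rightarrow> real \<Rightarrow> ereal" where
  "surface_tension d g a \<beta> = liminf (\<lambda>L. liminf (\<lambda>M.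
      ereal (1 / real L ^ (d - 1) * ln (Z_pp d g a L M \<beta> / Z_pm d g a L M \<beta>))))"

end

theory Submission
  imports Defs "HOL-Probability.Probability"
begin


lemma quartic_bound:
  fixes g a t :: real assumes "g > 0"
  shows "- g * t ^ 4 - a * t ^ 2 \<le> (1/2 - a)^2 / (4*g) - t^2/2"
proof -
  have "0 \<le> (2*g*t^2 - (1/2 - a))^2 / (4*g)" using assms by simp
  also have "\<dots> = g * t^4 - (1/2 - a) * t^2 + (1/2 - a)^2/(4*g)"
    using assms by (simp add: field_simps power2_eq_square) (simp add: algebra_simps power4_eq_xxxx power2_eq_square)
  finally show ?thesis by (simp add: algebra_simps)
qed

lemma integrable_quartic:
  fixes g a :: real assumes "g > 0"
  shows "integrable lborel (\<lambda>t. exp (- g * t ^ 4 - a * t ^ 2))"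
proof -
  define K where "K = exp ((1/2 - a)^2 / (4*g)) * sqrt (2*pi)"
  have i: "integrable lborel (\<lambda>t. K * normal_density 0 1 t)" by simp
  show ?thesis
  proof (rule Bochner_Integration.integrable_bound[OF i])
    show "(\<lambda>t. exp (- g * t ^ 4 - a * t ^ 2)) \<in> borel_measurable lborel" by measurable
    show "AE t in lborel. norm (exp (- g * t ^ 4 - a * t ^ 2)) \<le> norm (K * normal_density 0 1 t)"
    proof (rule AE_I2)
      fix t :: real
      have "exp (- g * t ^ 4 - a * t ^ 2) \<le> exp ((1/2 - a)^2 / (4*g) - t^2/2)"
        using quartic_bound[OF assms] by simp
      also have "\<dots> = K * normal_density 0 1 t"
      proof -
        have "exp ((1/2 - a)^2 / (4*g) - t^2/2) = exp ((1/2 - a)^2 / (4*g)) * exp (- (t^2/2))"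
          by (simp add: exp_add[symmetric])
        then show ?thesis unfolding K_def normal_density_def by simp
      qed
      finally show "norm (exp (- g * t ^ 4 - a * t ^ 2)) \<le> norm (K * normal_density 0 1 t)"
        by (simp add: K_def)
    qed
  qed
qed

lemma rho_prob: assumes "g > 0" shows "prob_space (rho g a)"
proof -
  let ?f = "\<lambda>t::real. exp (- g * t ^ 4 - a * t ^ 2)"
  define c where "c = (\<integral>s. ?f s \<partial>lborel)"
  have int: "integrable lborel ?f" by (rule integrable_quartic[OF assms])
  have c0: "c \<ge> 0" unfolding c_def by (rule integral_nonneg_AE) simp
  have "c \<noteq> 0"
  proof
    assume "c = 0"
    then have "AE x in lborel. ?f x = 0" using integral_nonneg_eq_0_iff_AE[OF int] c_def by simp
    then have "AE (x::real) in lborel. False" by simp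
    then have "ae_filter (lborel::real measure) = bot" using trivial_limit_def by blast
    then show False unfolding ae_filter_eq_bot_iff by simp
  qed
  with c0 have cpos: "c > 0" by simp
  show ?thesis
  proof (rule prob_spaceI)
    have "emeasure (rho g a) (space (rho g a)) = (\<integral>\<^sup>+ t. ennreal (?f t / c) \<partial>lborel)"
      unfolding rho_def c_def[symmetric] by (simp add: emeasure_density)
    also have "\<dots> = ennreal (\<integral>t. ?f t / c \<partial>lborel)"
      by (rule nn_integral_eq_integral) (use int cpos in auto)
    also have "(\<integral>t. ?f t / c \<partial>lborel) = 1" using cpos by (simp add: c_def)
    finally show "emeasure (rho g a) (space (rho g a)) = 1" by simp
  qed
qed

lemma sets_rho[simp, measurable_cong]: "sets (rho g a) = sets borel"
  by (simp add: rho_def)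

lemma space_rho[simp]: "space (rho g a) = UNIV"
  by (simp add: rho_def)

lemma rho_sym: "distr (rho g a) borel uminus = rho g a"
proof -
  let ?f = "\<lambda>t::real. ennreal (exp (- g * t ^ 4 - a * t ^ 2) /
       (\<integral>s. exp (- g * s ^ 4 - a * s ^ 2) \<partial>lborel))"
  have "density (distr lborel borel uminus) ?f = distr (density lborel (\<lambda>x. ?f (- x))) borel uminus"
    by (rule density_distr) auto
  then show ?thesis unfolding rho_def lborel_distr_uminus by simp
qed


lemma distr_PiM_gen:
  assumes fin: "finite I" and P: "prob_space \<mu>" and f[measurable]: "\<And>i. i \<in> I \<Longrightarrow> f i \<in> \<mu> \<rightarrow>\<^sub>M \<mu>"
  shows "distr (PiM I (\<lambda>_. \<mu>)) (PiM I (\<lambda>_. \<mu>)) (\<lambda>x. \<lambda>i\<in>I. f i (x i)) = PiM I (\<lambda>i. distr \<mu> \<mu> (f i))"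
proof -
  interpret M: product_prob_space "\<lambda>_. \<mu>"
    by (intro product_prob_spaceI) (rule P)
  define N where "N = (\<lambda>i. if i \<in> I then distr \<mu> \<mu> (f i) else \<mu>)"
  have [intro]: "prob_space (N i)" for i
    by (auto simp: N_def intro!: prob_space.prob_space_distr P)
  interpret N: product_prob_space N
    by (intro product_prob_spaceI) auto
  have meas: "(\<lambda>x. \<lambda>i\<in>I. f i (x i)) \<in> PiM I (\<lambda>_. \<mu>) \<rightarrow>\<^sub>M PiM I (\<lambda>_. \<mu>)"
  proof (intro measurable_restrict)
    fix i assume i: "i \<in> I"
    show "(\<lambda>x. f i (x i)) \<in> PiM I (\<lambda>_. \<mu>) \<rightarrow>\<^sub>M \<mu>"
      using measurable_compose[OF measurable_component_singleton[OF i] f[OF i]] by simp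
  qed
  have "distr (PiM I (\<lambda>_. \<mu>)) (PiM I (\<lambda>_. \<mu>)) (\<lambda>x. \<lambda>i\<in>I. f i (x i)) = PiM I N"
  proof (rule N.PiM_eqI)
    have N_events_eq: "sets (Pi\<^sub>M I N) = sets (Pi\<^sub>M I (\<lambda>_. \<mu>))"
      unfolding N_def by (intro sets_PiM_cong) auto
    then show "sets (distr (PiM I (\<lambda>_. \<mu>)) (PiM I (\<lambda>_. \<mu>)) (\<lambda>x. \<lambda>i\<in>I. f i (x i))) = sets (Pi\<^sub>M I N)"
      by simp
    fix A assume A: "\<And>i. i \<in> I \<Longrightarrow> A i \<in> sets (N i)"
    have A': "\<And>i. i \<in> I \<Longrightarrow> A i \<in> sets \<mu>" using A by (simp add: N_def)
    have "emeasure (distr (PiM I (\<lambda>_. \<mu>)) (PiM I (\<lambda>_. \<mu>)) (\<lambda>x. \<lambda>i\<in>I. f i (x i))) (Pi\<^sub>E I A) =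
          emeasure (Pi\<^sub>M I (\<lambda>_. \<mu>)) ((\<lambda>x. \<lambda>i\<in>I. f i (x i)) -` Pi\<^sub>E I A \<inter> space (Pi\<^sub>M I (\<lambda>_. \<mu>)))"
    proof (intro emeasure_distr meas)
      show "Pi\<^sub>E I A \<in> sets (Pi\<^sub>M I (\<lambda>_. \<mu>))"
        by (intro sets_PiM_I_finite fin A')
    qed
    also have "(\<lambda>x. \<lambda>i\<in>I. f i (x i)) -` Pi\<^sub>E I A \<inter> space (Pi\<^sub>M I (\<lambda>_. \<mu>)) = Pi\<^sub>E I (\<lambda>i. f i -` A i \<inter> space \<mu>)"
      using A by (auto simp: space_PiM PiE_def Pi_def extensional_def)
    also have "emeasure (Pi\<^sub>M I (\<lambda>_. \<mu>)) (Pi\<^sub>E I (\<lambda>i. f i -` A i \<inter> space \<mu>)) =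
          (\<Prod>i\<in>I. emeasure \<mu> (f i -` A i \<inter> space \<mu>))"
      using A' by (intro M.emeasure_PiM fin) (auto intro: measurable_sets)
    also have "\<dots> = (\<Prod>i\<in>I. emeasure (distr \<mu> \<mu> (f i)) (A i))"
      using A' by (intro prod.cong emeasure_distr [symmetric]) auto
    also have "\<dots> = (\<Prod>i\<in>I. emeasure (N i) (A i))"
      unfolding N_def by (intro prod.cong) auto
    finally show "emeasure (distr (PiM I (\<lambda>_. \<mu>)) (PiM I (\<lambda>_. \<mu>)) (\<lambda>x. \<lambda>i\<in>I. f i (x i))) (Pi\<^sub>E I A) = \<dots>" .
  qed (rule fin)
  also have "PiM I N = PiM I (\<lambda>i. distr \<mu> \<mu> (f i))"
    by (intro PiM_cong) (auto simp: N_def)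
  finally show ?thesis .
qed

lemma PiM_flip:
  assumes fin: "finite I" and g: "g > 0" and \<tau>: "\<tau> \<in> I \<rightarrow>\<^sub>E {-1, 1::real}"
  shows "distr (PiM I (\<lambda>_. rho g a)) (PiM I (\<lambda>_. rho g a)) (\<lambda>x. \<lambda>i\<in>I. \<tau> i * x i) = PiM I (\<lambda>_. rho g a)"
proof -
  have "distr (PiM I (\<lambda>_. rho g a)) (PiM I (\<lambda>_. rho g a)) (\<lambda>x. \<lambda>i\<in>I. \<tau> i * x i)
      = PiM I (\<lambda>i. distr (rho g a) (rho g a) (\<lambda>t. \<tau> i * t))"
    by (rule distr_PiM_gen[OF fin rho_prob[OF g]]) auto
  also have "\<dots> = PiM I (\<lambda>_. rho g a)"
  proof (rule PiM_cong)
    fix i assume i: "i \<in> I"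
    show "distr (rho g a) (rho g a) (\<lambda>t. \<tau> i * t) = rho g a"
    proof (cases "\<tau> i = 1")
      case True
      then show ?thesis using distr_id[of "rho g a"] by simp
    next
      case False
      then have "\<tau> i = -1" using \<tau> i by auto
      then have "distr (rho g a) (rho g a) (\<lambda>t. \<tau> i * t) = distr (rho g a) borel uminus"
        by (intro distr_cong) auto
      then show ?thesis using rho_sym by simp
    qed
  qed simp
  finally show ?thesis .
qed

lemma PiM_abs:
  assumes fin: "finite I" and g: "g > 0"
  shows "PiM I (\<lambda>_. distr (rho g a) borel abs) = distr (PiM I (\<lambda>_. rho g a)) (PiM I (\<lambda>_. rho g a)) (\<lambda>x. \<lambda>i\<in>I. \<bar>x i\<bar>)"
proof -
  have "distr (PiM I (\<lambda>_. rho g a)) (PiM I (\<lambda>_. rho g a)) (\<lambda>x. \<lambda>i\<in>I. \<bar>x i\<bar>)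
      = PiM I (\<lambda>i. distr (rho g a) (rho g a) abs)"
    by (rule distr_PiM_gen[OF fin rho_prob[OF g]]) auto
  also have "\<dots> = PiM I (\<lambda>_. distr (rho g a) borel abs)"
    by (intro PiM_cong distr_cong) auto
  finally show ?thesis by simp
qed



lemma rtrancl_respect:
  assumes "\<forall>(u,v)\<in>r. s u = s v" "(u, v) \<in> r\<^sup>*"
  shows "s u = s v"
  using assms(2) by (induction rule: rtrancl_induct) (use assms(1) in auto)

lemma rtrancl_closed:
  assumes "r \<subseteq> U \<times> U" "(u, v) \<in> r\<^sup>*" "u \<in> U"
  shows "v \<in> U"
  using assms(2,3) by (induction rule: rtrancl_induct) (use assms(1) in auto)

lemma card_respect:
  fixes U :: "'a set" and r :: "('a \<times> 'a) set" and X :: "'b set"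
  assumes fin: "finite U" and rU: "r \<subseteq> U \<times> U" and sym: "sym r"
  shows "card {s \<in> U \<rightarrow>\<^sub>E X. \<forall>(u,v)\<in>r. s u = s v} = card X ^ card (U // r\<^sup>*)"
proof -
  let ?R = "r\<^sup>*"
  have symR: "sym ?R" by (rule sym_rtrancl[OF sym])
  have cls: "?R `` {u} = ?R `` {v}" if "(u, v) \<in> ?R" for u v
  proof -
    have "(v, u) \<in> ?R" using symR that by (auto dest: symD)
    then show ?thesis using that by (auto intro: rtrancl_trans)
  qed
  define \<Phi> where "\<Phi> f = (\<lambda>u\<in>U. f (?R `` {u}))" for f :: "'a set \<Rightarrow> 'b"
  have inj: "inj_on \<Phi> (U // ?R \<rightarrow>\<^sub>E X)"
  proof (rule inj_onI)
    fix f f' assume f: "f \<in> U // ?R \<rightarrow>\<^sub>E X" and f': "f' \<in> U // ?R \<rightarrow>\<^sub>E X" and eq: "\<Phi> f = \<Phi> f'"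
    show "f = f'"
    proof (rule PiE_ext[OF f f'])
      fix C assume "C \<in> U // ?R"
      then obtain u where u: "u \<in> U" "C = ?R `` {u}" by (auto simp: quotient_def)
      have "\<Phi> f u = \<Phi> f' u" using eq by simp
      then show "f C = f' C" using u by (simp add: \<Phi>_def)
    qed
  qed
  have img: "\<Phi> ` (U // ?R \<rightarrow>\<^sub>E X) = {s \<in> U \<rightarrow>\<^sub>E X. \<forall>(u,v)\<in>r. s u = s v}"
  proof
    show "\<Phi> ` (U // ?R \<rightarrow>\<^sub>E X) \<subseteq> {s \<in> U \<rightarrow>\<^sub>E X. \<forall>(u,v)\<in>r. s u = s v}"
    proof (rule image_subsetI)
      fix f assume f: "f \<in> U // ?R \<rightarrow>\<^sub>E X"
      have 1: "\<Phi> f \<in> U \<rightarrow>\<^sub>E X" using f by (auto simp: \<Phi>_def quotientI)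
      have 2: "\<Phi> f u = \<Phi> f v" if "(u, v) \<in> r" for u v
      proof -
        have uv: "u \<in> U" "v \<in> U" using rU that by auto
        have e: "?R `` {u} = ?R `` {v}" using that by (intro cls) auto
        have "\<Phi> f u = f (?R `` {u})" "\<Phi> f v = f (?R `` {v})" using uv unfolding \<Phi>_def by auto
        then show ?thesis using e by metis
      qed
      show "\<Phi> f \<in> {s \<in> U \<rightarrow>\<^sub>E X. \<forall>(u,v)\<in>r. s u = s v}" using 1 2 by blast
    qed
  next
    show "{s \<in> U \<rightarrow>\<^sub>E X. \<forall>(u,v)\<in>r. s u = s v} \<subseteq> \<Phi> ` (U // ?R \<rightarrow>\<^sub>E X)"
    proof safe
      fix s assume s: "s \<in> U \<rightarrow>\<^sub>E X" and resp: "\<forall>(u,v)\<in>r. s u = s v"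
      define f where "f = (\<lambda>C\<in>U // ?R. s (SOME u. u \<in> C))"
      have "s = \<Phi> f"
      proof (rule extensionalityI[of _ U])
        show "s \<in> extensional U" using s by (simp add: PiE_def)
        show "\<Phi> f \<in> extensional U" by (simp add: \<Phi>_def)
        fix u assume u: "u \<in> U"
        have uin: "u \<in> ?R `` {u}" by simp
        then have "(SOME w. w \<in> ?R `` {u}) \<in> ?R `` {u}" by (rule someI)
        then have "(u, SOME w. w \<in> ?R `` {u}) \<in> ?R" by simp
        then have "s u = s (SOME w. w \<in> ?R `` {u})" by (rule rtrancl_respect[OF resp])
        then show "s u = \<Phi> f u" using u by (simp add: \<Phi>_def f_def quotientI)
      qed
      moreover have "f \<in> U // ?R \<rightarrow>\<^sub>E X"
      proof -
        have "s (SOME u. u \<in> C) \<in> X" if C: "C \<in> U // ?R" for C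
        proof -
          obtain u where u: "u \<in> U" "C = ?R `` {u}" using quotientE[OF C] by metis
          have "u \<in> C" using u by simp
          then have "(SOME w. w \<in> C) \<in> C" by (rule someI)
          then have "(u, SOME w. w \<in> C) \<in> ?R" using u by simp
          then have "(SOME w. w \<in> C) \<in> U" by (rule rtrancl_closed[OF rU _ u(1)])
          then show ?thesis using s by (rule PiE_mem[rotated])
        qed
        then show ?thesis by (auto simp: f_def)
      qed
      ultimately show "s \<in> \<Phi> ` (U // ?R \<rightarrow>\<^sub>E X)" by blast
    qed
  qed
  have finq: "finite (U // ?R)" using fin by (simp add: quotient_def)
  have "card {s \<in> U \<rightarrow>\<^sub>E X. \<forall>(u,v)\<in>r. s u = s v} = card (U // ?R \<rightarrow>\<^sub>E X)"
    using card_image[OF inj] img by simp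
  also have "\<dots> = card X ^ card (U // ?R)"
    using finq by (simp add: card_PiE)
  finally show ?thesis .
qed



lemma finite_box: "finite (box d L M)"
proof -
  define K where "K = int (max L M)"
  have "box d L M \<subseteq> (\<lambda>f i. if i < d then f i else 0) ` ({..<d} \<rightarrow>\<^sub>E {-K..K})"
  proof
    fix x assume x: "x \<in> box d L M"
    have "x = (\<lambda>i. if i < d then restrict x {..<d} i else 0)"
      using x by (auto simp: box_def)
    moreover have "restrict x {..<d} \<in> {..<d} \<rightarrow>\<^sub>E {-K..K}"
    proof -
      have "x i \<in> {-K..K}" if "i < d" for i
      proof (cases "i < d - 1")
        case True then show ?thesis using x by (force simp: box_def K_def)
      next
        case False then have "i = d - 1" using that by simp
        then show ?thesis using x by (force simp: box_def K_def)
      qed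
      then show ?thesis by auto
    qed
    ultimately show "x \<in> (\<lambda>f i. if i < d then f i else 0) ` ({..<d} \<rightarrow>\<^sub>E {-K..K})" by blast
  qed
  moreover have "finite ({..<d} \<rightarrow>\<^sub>E {-K..K})" by (intro finite_PiE) auto
  ultimately show ?thesis by (meson finite_imageI finite_subset)
qed

lemma nn_edge_form:
  assumes "e \<in> nn_edges d \<Lambda>"
  shows "\<exists>x y. e = {x, y} \<and> x \<noteq> y \<and> x \<in> \<Lambda> \<and> y \<in> \<Lambda>"
proof -
  obtain x y where xy: "e = {x, y}" "x \<in> \<Lambda>" "y \<in> \<Lambda>" "(\<Sum>i<d. \<bar>x i - y i\<bar>) = 1"
    using assms by (auto simp: nn_edges_def)
  have "x \<noteq> y" using xy(4) by auto
  then show ?thesis using xy by blast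
qed

lemma finite_nn_edges: "finite \<Lambda> \<Longrightarrow> finite (nn_edges d \<Lambda>)"
proof -
  assume "finite \<Lambda>"
  have "nn_edges d \<Lambda> \<subseteq> (\<lambda>(x, y). {x, y}) ` (\<Lambda> \<times> \<Lambda>)"
    by (auto simp: nn_edges_def)
  then show ?thesis by (rule finite_subset) (use \<open>finite \<Lambda>\<close> in auto)
qed

lemma thick_facts:
  "thick_top d L M \<subseteq> box d L M" "thick_bot d L M \<subseteq> box d L M"
  "thick_top d L M \<inter> thick_bot d L M = {}"
  "thick_top d L M \<union> thick_bot d L M = thick_bdry d L M"
  "thick_bdry d L M \<subseteq> box d L M"
  by (auto simp: thick_top_def thick_bot_def thick_bdry_def box_def)

lemma finite_ghost_edges: "finite (ghost_edges d L M)"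
  using finite_box[of d L M] thick_facts[of d L M]
  by (auto simp: ghost_edges_def intro!: finite_nn_edges intro: finite_subset)

lemma ghost_edge_form:
  assumes "ge \<in> ghost_edges d L M"
  shows "\<exists>u v. ge = {u, v} \<and> u \<noteq> v \<and> u \<in> V ` box d L M \<union> {Gp, Gm} \<and> v \<in> V ` box d L M \<union> {Gp, Gm}"
  using assms thick_facts[of d L M]
  by (auto simp: ghost_edges_def dest!: nn_edge_form) blast+



definition spin :: "real \<Rightarrow> ((nat \<Rightarrow> int) \<Rightarrow> real) \<Rightarrow> vtx \<Rightarrow> real" where
  "spin m \<sigma> v = (case v of V x \<Rightarrow> \<sigma> x | Gp \<Rightarrow> 1 | Gm \<Rightarrow> m)"

definition compatible :: "(vtx \<Rightarrow> real) \<Rightarrow> vtx set set \<Rightarrow> bool" where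
  "compatible S \<omega> \<longleftrightarrow> (\<forall>u v. {u, v} \<in> \<omega> \<longrightarrow> S u = S v)"

lemma spin_simps[simp]: "spin m \<sigma> (V x) = \<sigma> x" "spin m \<sigma> Gp = 1" "spin m \<sigma> Gm = m"
  by (simp_all add: spin_def)

lemma spin_in:
  assumes "\<sigma> \<in> \<Lambda> \<rightarrow>\<^sub>E {-1, 1}" "w \<in> V ` \<Lambda> \<union> {Gp, Gm}" "m \<in> {-1, 1}"
  shows "spin m \<sigma> w \<in> {-1, 1}"
  using assms by auto

lemma merged_rel_sub:
  assumes "\<omega> \<subseteq> ghost_edges d L M"
  shows "merged_rel \<omega> \<subseteq> (V ` box d L M \<union> {Gp}) \<times> (V ` box d L M \<union> {Gp})"
proof (rule subsetI)
  fix p assume "p \<in> merged_rel \<omega>"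
  then obtain u v where uv: "p = (merge_g u, merge_g v)" "{u, v} \<in> \<omega>" by (auto simp: merged_rel_def)
  obtain u' v' where "{u, v} = {u', v'}" "u' \<in> V ` box d L M \<union> {Gp, Gm}" "v' \<in> V ` box d L M \<union> {Gp, Gm}"
    using ghost_edge_form[OF subsetD[OF assms uv(2)]] by metis
  moreover have "u \<in> {u, v}" "v \<in> {u, v}" by simp_all
  ultimately have "u \<in> V ` box d L M \<union> {Gp, Gm}" "v \<in> V ` box d L M \<union> {Gp, Gm}" by (metis insertE empty_iff)+
  then show "p \<in> (V ` box d L M \<union> {Gp}) \<times> (V ` box d L M \<union> {Gp})"
    using uv by (auto simp: merge_g_def)
qed

lemma sym_merged_rel: "sym (merged_rel \<omega>)"
proof (rule symI)
  fix a b assume "(a, b) \<in> merged_rel \<omega>"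
  then obtain u v where "a = merge_g u" "b = merge_g v" "{u, v} \<in> \<omega>" by (auto simp: merged_rel_def)
  moreover have "{v, u} \<in> \<omega>" using calculation(3) by (simp add: insert_commute)
  ultimately show "(b, a) \<in> merged_rel \<omega>" unfolding merged_rel_def by blast
qed

lemma spin1_merge: "spin 1 \<sigma> (merge_g w) = spin 1 \<sigma> w"
  by (cases w) (auto simp: merge_g_def)

lemma ghost_edge_endpoints:
  assumes "{u, v} \<in> ghost_edges d L M"
  shows "u \<in> V ` box d L M \<union> {Gp, Gm}" "v \<in> V ` box d L M \<union> {Gp, Gm}"
proof -
  obtain u' v' where "{u, v} = {u', v'}" "u' \<in> V ` box d L M \<union> {Gp, Gm}" "v' \<in> V ` box d L M \<union> {Gp, Gm}"
    using ghost_edge_form[OF assms] by metis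
  moreover have "u \<in> {u, v}" "v \<in> {u, v}" by simp_all
  ultimately show "u \<in> V ` box d L M \<union> {Gp, Gm}" "v \<in> V ` box d L M \<union> {Gp, Gm}" by (metis insertE empty_iff)+
qed

lemma pp_count:
  assumes \<omega>: "\<omega> \<subseteq> ghost_edges d L M"
  shows "2 * card {\<sigma> \<in> box d L M \<rightarrow>\<^sub>E {-1, 1::real}. compatible (spin 1 \<sigma>) \<omega>} = 2 ^ k_tilde d L M \<omega>"
proof -
  let ?\<Lambda> = "box d L M"
  let ?U = "V ` ?\<Lambda> \<union> {Gp}"
  let ?r = "merged_rel \<omega>"
  let ?X = "{-1, 1::real}"
  define A where "A = {s \<in> ?U \<rightarrow>\<^sub>E ?X. \<forall>(a, b)\<in>?r. s a = s b}"
  define A1 where "A1 = {s \<in> A. s Gp = 1}"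
  define A2 where "A2 = {s \<in> A. s Gp = -1}"
  define S where "S = {\<sigma> \<in> ?\<Lambda> \<rightarrow>\<^sub>E ?X. compatible (spin 1 \<sigma>) \<omega>}"
  have finU: "finite ?U" using finite_box by simp
  have cardA: "card A = 2 ^ k_tilde d L M \<omega>"
    unfolding A_def k_tilde_def
    using card_respect[OF finU merged_rel_sub[OF \<omega>] sym_merged_rel, of ?X] by (simp add: numeral_2_eq_2)
  have "A \<subseteq> ?U \<rightarrow>\<^sub>E ?X" by (auto simp: A_def)
  moreover have "finite (?U \<rightarrow>\<^sub>E ?X)" using finU by (intro finite_PiE) auto
  ultimately have finA: "finite A" by (rule finite_subset)
  have A12: "A = A1 \<union> A2" "A1 \<inter> A2 = {}"
  proof -
    have "s Gp \<in> ?X" if "s \<in> A" for s using that by (auto simp: A_def)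
    then show "A = A1 \<union> A2" by (auto simp: A1_def A2_def)
  qed (auto simp: A1_def A2_def)
  have c12: "card A = card A1 + card A2"
    using A12 finA by (simp add: card_Un_disjoint)
  define neg where "neg s = (\<lambda>u\<in>?U. - s u)" for s :: "vtx \<Rightarrow> real"
  have "inj_on neg A1"
  proof (rule inj_onI)
    fix s s' assume "s \<in> A1" "s' \<in> A1" "neg s = neg s'"
    then show "s = s'" unfolding A1_def A_def
      by (intro PiE_ext[of s ?U "\<lambda>_. ?X" s']) (auto simp: neg_def fun_eq_iff split: if_splits)
  qed
  moreover have "neg ` A1 = A2"
  proof -
  have rU: "?r \<subseteq> ?U \<times> ?U" by (rule merged_rel_sub[OF \<omega>])
  have negA: "neg s \<in> A" if s: "s \<in> A" for s
  proof -
    have "neg s \<in> ?U \<rightarrow>\<^sub>E ?X" using s by (auto simp: A_def neg_def PiE_iff)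
    moreover have "neg s a = neg s b" if ab: "(a, b) \<in> ?r" for a b
    proof -
      have "a \<in> ?U" "b \<in> ?U" using ab rU by auto
      moreover have "s a = s b" using s ab by (auto simp: A_def)
      ultimately show ?thesis by (simp add: neg_def)
    qed
    ultimately show ?thesis by (auto simp: A_def)
  qed
  have negGp: "neg s Gp = - s Gp" for s by (simp add: neg_def)
  show ?thesis
  proof
    show "neg ` A1 \<subseteq> A2"
      using negA negGp by (auto simp: A1_def A2_def)
    show "A2 \<subseteq> neg ` A1"
    proof
      fix s assume s: "s \<in> A2"
      have "neg s \<in> A1" using s negA negGp by (auto simp: A1_def A2_def)
      moreover have "s = neg (neg s)"
        using s by (intro PiE_ext[of s ?U "\<lambda>_. ?X"]) (auto simp: A2_def A_def neg_def PiE_iff)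
      ultimately show "s \<in> neg ` A1" by blast
    qed
  qed
  qed
  ultimately have c2: "card A2 = card A1" using card_image by fastforce
  define emb where "emb \<sigma> = restrict (spin 1 \<sigma>) ?U" for \<sigma>
  have "inj_on emb S"
  proof (rule inj_onI)
    fix \<sigma> \<sigma>' assume s: "\<sigma> \<in> S" "\<sigma>' \<in> S" and e: "emb \<sigma> = emb \<sigma>'"
    show "\<sigma> = \<sigma>'"
    proof (rule PiE_ext[of \<sigma> ?\<Lambda> "\<lambda>_. ?X" \<sigma>'])
      show "\<sigma> \<in> ?\<Lambda> \<rightarrow>\<^sub>E ?X" "\<sigma>' \<in> ?\<Lambda> \<rightarrow>\<^sub>E ?X" using s by (auto simp: S_def)
      fix x assume "x \<in> ?\<Lambda>"
      then show "\<sigma> x = \<sigma>' x" using fun_cong[OF e, of "V x"] by (simp add: emb_def)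
    qed
  qed
  moreover have "emb ` S = A1"
  proof
    show "emb ` S \<subseteq> A1"
    proof
      fix s assume "s \<in> emb ` S"
      then obtain \<sigma> where \<sigma>: "\<sigma> \<in> S" "s = emb \<sigma>" by blast
      have 1: "s \<in> ?U \<rightarrow>\<^sub>E ?X" using \<sigma> by (auto simp: S_def emb_def PiE_iff)
      have 2: "s a = s b" if abr: "(a, b) \<in> ?r" for a b
      proof -
        obtain u v where uv: "a = merge_g u" "b = merge_g v" "{u, v} \<in> \<omega>"
          using abr unfolding merged_rel_def by blast
        have ab: "a \<in> ?U" "b \<in> ?U" using merged_rel_sub[OF \<omega>] abr by auto
        have "spin 1 \<sigma> u = spin 1 \<sigma> v" using \<sigma> uv by (auto simp: S_def compatible_def)
        then show ?thesis using ab uv \<sigma>(2) by (simp add: emb_def spin1_merge)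
      qed
      have 3: "s Gp = 1" using \<sigma> by (simp add: emb_def)
      show "s \<in> A1" using 1 2 3 by (auto simp: A1_def A_def)
    qed
    show "A1 \<subseteq> emb ` S"
    proof
      fix s assume s: "s \<in> A1"
      define \<sigma> where "\<sigma> = (\<lambda>x\<in>?\<Lambda>. s (V x))"
      have sU: "s \<in> ?U \<rightarrow>\<^sub>E ?X" and sr: "\<forall>(a, b)\<in>?r. s a = s b" and s1: "s Gp = 1"
        using s by (auto simp: A1_def A_def)
      have sp: "spin 1 \<sigma> w = s (merge_g w)" if "w \<in> V ` ?\<Lambda> \<union> {Gp, Gm}" for w
        using that s1 by (auto simp: \<sigma>_def merge_g_def)
      have "\<sigma> \<in> S"
      proof -
        have "\<sigma> \<in> ?\<Lambda> \<rightarrow>\<^sub>E ?X" using sU by (auto simp: \<sigma>_def PiE_iff)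
        moreover have "compatible (spin 1 \<sigma>) \<omega>"
          unfolding compatible_def
        proof (intro allI impI)
          fix u v assume uv: "{u, v} \<in> \<omega>"
          then have "(merge_g u, merge_g v) \<in> ?r" by (auto simp: merged_rel_def)
          then have "s (merge_g u) = s (merge_g v)" using sr by auto
          moreover have "u \<in> V ` ?\<Lambda> \<union> {Gp, Gm}" "v \<in> V ` ?\<Lambda> \<union> {Gp, Gm}"
            using ghost_edge_endpoints uv \<omega> by blast+
          ultimately show "spin 1 \<sigma> u = spin 1 \<sigma> v" using sp by simp
        qed
        ultimately show ?thesis by (simp add: S_def)
      qed
      moreover have "emb \<sigma> = s"
      proof (rule extensionalityI[of _ ?U])
        show "emb \<sigma> \<in> extensional ?U" by (simp add: emb_def)
        show "s \<in> extensional ?U" using sU by (simp add: PiE_def)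
        fix u assume "u \<in> ?U"
        then show "emb \<sigma> u = s u" using s1 by (auto simp: emb_def \<sigma>_def)
      qed
      ultimately show "s \<in> emb ` S" by blast
    qed
  qed
  ultimately have c1: "card S = card A1" using card_image by fastforce
  show ?thesis using c1 c2 c12 cardA by (simp add: S_def)
qed


lemma compat_rtrancl:
  assumes "compatible S \<omega>" "(u, v) \<in> (open_rel \<omega>)\<^sup>*"
  shows "S u = S v"
proof (rule rtrancl_respect[OF _ assms(2)])
  show "\<forall>(u, v)\<in>open_rel \<omega>. S u = S v" using assms(1) by (auto simp: compatible_def open_rel_def)
qed

lemma pm_count:
  assumes \<omega>: "\<omega> \<subseteq> ghost_edges d L M"
  shows "card {\<sigma> \<in> box d L M \<rightarrow>\<^sub>E {-1, 1::real}. compatible (spin (-1) \<sigma>) \<omega>} =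
    (if ghosts_connected \<omega> then 0 else card {\<sigma> \<in> box d L M \<rightarrow>\<^sub>E {-1, 1::real}. compatible (spin 1 \<sigma>) \<omega>})"
proof (cases "ghosts_connected \<omega>")
  case True
  have e: "{\<sigma> \<in> box d L M \<rightarrow>\<^sub>E {-1, 1::real}. compatible (spin (-1) \<sigma>) \<omega>} = {}"
  proof (rule ccontr)
    assume "{\<sigma> \<in> box d L M \<rightarrow>\<^sub>E {-1, 1::real}. compatible (spin (-1) \<sigma>) \<omega>} \<noteq> {}"
    then obtain \<sigma> where "compatible (spin (-1) \<sigma>) \<omega>" by blast
    then have "spin (-1) \<sigma> Gm = spin (-1) \<sigma> Gp"
      using True compat_rtrancl unfolding ghosts_connected_def by blast
    then show False by simp
  qed
  have "card {\<sigma> \<in> box d L M \<rightarrow>\<^sub>E {-1, 1::real}. compatible (spin (-1) \<sigma>) \<omega>} = 0"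
    by (simp only: e card.empty)
  then show ?thesis using True by simp
next
  case False
  let ?\<Lambda> = "box d L M"
  let ?X = "{-1, 1::real}"
  let ?Q = "(open_rel \<omega>)\<^sup>*"
  define chi where "chi w = (if (Gm, w) \<in> ?Q then -1 else (1::real))" for w
  define flip where "flip \<sigma> = (\<lambda>x\<in>?\<Lambda>. chi (V x) * \<sigma> x)" for \<sigma> :: "(nat \<Rightarrow> int) \<Rightarrow> real"
  have GpQ: "(Gm, Gp) \<notin> ?Q" using False by (simp add: ghosts_connected_def)
  have key1: "spin 1 (flip \<sigma>) w = chi w * spin (-1) \<sigma> w" and key2: "spin (-1) (flip \<sigma>) w = chi w * spin 1 \<sigma> w"
    if "w \<in> V ` ?\<Lambda> \<union> {Gp, Gm}" for \<sigma> w
    using that GpQ by (auto simp: flip_def chi_def)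
  have chi_edge: "chi u = chi v" if "{u, v} \<in> \<omega>" for u v
  proof -
    have "(u, v) \<in> open_rel \<omega>" "(v, u) \<in> open_rel \<omega>" using that by (auto simp: open_rel_def insert_commute)
    then have "(Gm, u) \<in> ?Q \<longleftrightarrow> (Gm, v) \<in> ?Q" by (meson rtrancl.rtrancl_into_rtrancl)
    then show ?thesis by (simp add: chi_def)
  qed
  have chi_nz: "chi w \<noteq> 0" for w by (simp add: chi_def)
  have ends: "u \<in> V ` ?\<Lambda> \<union> {Gp, Gm}" "v \<in> V ` ?\<Lambda> \<union> {Gp, Gm}" if "{u, v} \<in> \<omega>" for u v
    using ghost_edge_endpoints[of u v d L M] that \<omega> by blast+
  have c1: "compatible (spin 1 (flip \<sigma>)) \<omega> \<longleftrightarrow> compatible (spin (-1) \<sigma>) \<omega>" for \<sigma>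
    unfolding compatible_def
  proof (intro iffI allI impI)
    fix u v assume h: "\<forall>u v. {u, v} \<in> \<omega> \<longrightarrow> spin 1 (flip \<sigma>) u = spin 1 (flip \<sigma>) v" and uv: "{u, v} \<in> \<omega>"
    then have "chi u * spin (-1) \<sigma> u = chi v * spin (-1) \<sigma> v" using key1 ends[OF uv] by metis
    then show "spin (-1) \<sigma> u = spin (-1) \<sigma> v" using chi_edge[OF uv] chi_nz by simp
  next
    fix u v assume h: "\<forall>u v. {u, v} \<in> \<omega> \<longrightarrow> spin (-1) \<sigma> u = spin (-1) \<sigma> v" and uv: "{u, v} \<in> \<omega>"
    then show "spin 1 (flip \<sigma>) u = spin 1 (flip \<sigma>) v" using key1 ends[OF uv] chi_edge[OF uv] by metis
  qed
  have c2: "compatible (spin (-1) (flip \<sigma>)) \<omega> \<longleftrightarrow> compatible (spin 1 \<sigma>) \<omega>" for \<sigma>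
    unfolding compatible_def
  proof (intro iffI allI impI)
    fix u v assume h: "\<forall>u v. {u, v} \<in> \<omega> \<longrightarrow> spin (-1) (flip \<sigma>) u = spin (-1) (flip \<sigma>) v" and uv: "{u, v} \<in> \<omega>"
    then have "chi u * spin 1 \<sigma> u = chi v * spin 1 \<sigma> v" using key2 ends[OF uv] by metis
    then show "spin 1 \<sigma> u = spin 1 \<sigma> v" using chi_edge[OF uv] chi_nz by simp
  next
    fix u v assume h: "\<forall>u v. {u, v} \<in> \<omega> \<longrightarrow> spin 1 \<sigma> u = spin 1 \<sigma> v" and uv: "{u, v} \<in> \<omega>"
    then show "spin (-1) (flip \<sigma>) u = spin (-1) (flip \<sigma>) v" using key2 ends[OF uv] chi_edge[OF uv] by metis
  qed
  have fl: "flip \<sigma> \<in> ?\<Lambda> \<rightarrow>\<^sub>E ?X" if "\<sigma> \<in> ?\<Lambda> \<rightarrow>\<^sub>E ?X" for \<sigma>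
    using that by (auto simp: flip_def chi_def PiE_iff)
  have ff: "flip (flip \<sigma>) = \<sigma>" if "\<sigma> \<in> ?\<Lambda> \<rightarrow>\<^sub>E ?X" for \<sigma>
  proof (rule extensionalityI[of _ ?\<Lambda>])
    show "flip (flip \<sigma>) \<in> extensional ?\<Lambda>" by (simp add: flip_def)
    show "\<sigma> \<in> extensional ?\<Lambda>" using that by (simp add: PiE_def)
    fix x assume "x \<in> ?\<Lambda>" then show "flip (flip \<sigma>) x = \<sigma> x" by (simp add: flip_def chi_def)
  qed
  have "bij_betw flip {\<sigma> \<in> ?\<Lambda> \<rightarrow>\<^sub>E ?X. compatible (spin (-1) \<sigma>) \<omega>} {\<sigma> \<in> ?\<Lambda> \<rightarrow>\<^sub>E ?X. compatible (spin 1 \<sigma>) \<omega>}"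
    by (rule bij_betw_byWitness[where f'=flip]) (use ff fl c1 c2 in auto)
  then show ?thesis using False by (simp add: bij_betw_same_card)
qed



lemma sqrt_exp_neg2: "sqrt (exp (- 2 * y)) = exp (- y)"
proof -
  have "exp (- 2 * y) = exp (- y) * exp (- y)" by (simp add: exp_add[symmetric])
  then show ?thesis by simp
qed

lemma edge_expand:
  fixes su sv J \<beta> :: real
  assumes "su \<in> {-1, 1}" "sv \<in> {-1, 1}"
  shows "exp (\<beta> * (su * sv * J)) = (if su = sv then edge_factor (1 - exp (- 2 * \<beta> * J)) True else 0)
            + edge_factor (1 - exp (- 2 * \<beta> * J)) False"
proof -
  have sq: "sqrt (exp (- (2 * \<beta> * J))) = exp (- (\<beta> * J))"
    using sqrt_exp_neg2[of "\<beta> * J"] by (simp add: mult.assoc)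
  have e2: "exp (- 2 * \<beta> * J) = exp (- (\<beta> * J)) * exp (- (\<beta> * J))" by (simp add: exp_add[symmetric])
  have inv: "exp (- (\<beta> * J)) * exp (\<beta> * J) = 1" by (simp add: exp_minus)
  show ?thesis
  proof (cases "su = sv")
    case True
    then have "su * sv = 1" using assms by auto
    moreover have "exp (\<beta> * J) = exp (- (\<beta> * J)) * ((1 - exp (- 2 * \<beta> * J)) / exp (- 2 * \<beta> * J)) + exp (- (\<beta> * J))"
      unfolding e2 using inv by (simp add: field_simps exp_minus)
    ultimately show ?thesis using True by (simp add: edge_factor_def sq)
  next
    case False
    then have "su * sv = -1" using assms by auto
    then show ?thesis using False by (simp add: edge_factor_def sq)
  qed
qed

lemma expansion:
  fixes GE :: "vtx set set" and S val :: "vtx \<Rightarrow> real" and \<beta> :: real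
  assumes fin: "finite GE"
    and form: "\<And>ge. ge \<in> GE \<Longrightarrow> \<exists>u v. ge = {u, v} \<and> u \<noteq> v \<and> S u \<in> {-1, 1} \<and> S v \<in> {-1, 1}"
  shows "exp (\<beta> * (\<Sum>ge\<in>GE. \<Prod>w\<in>ge. S w * val w)) =
    (\<Sum>\<omega>\<in>Pow GE. if compatible S \<omega> then (\<Prod>ge\<in>GE. edge_factor (1 - exp (- 2 * \<beta> * (\<Prod>w\<in>ge. val w))) (ge \<in> \<omega>)) else 0)"
proof -
  define p where "p ge = 1 - exp (- 2 * \<beta> * (\<Prod>w\<in>ge. val w))" for ge
  define c where "c ge = (\<forall>u\<in>ge. \<forall>v\<in>ge. S u = S v)" for ge
  define f1 where "f1 ge = (if c ge then edge_factor (p ge) True else 0)" for ge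
  define f2 where "f2 ge = edge_factor (p ge) False" for ge
  have each: "exp (\<beta> * (\<Prod>w\<in>ge. S w * val w)) = f1 ge + f2 ge" if ge: "ge \<in> GE" for ge
  proof -
    obtain u v where uv: "ge = {u, v}" "u \<noteq> v" "S u \<in> {-1, 1}" "S v \<in> {-1, 1}" using form[OF ge] by blast
    have "(\<Prod>w\<in>ge. S w * val w) = S u * S v * (\<Prod>w\<in>ge. val w)" using uv by simp
    moreover have "c ge \<longleftrightarrow> S u = S v" using uv by (auto simp: c_def)
    ultimately show ?thesis using edge_expand[OF uv(3,4), of \<beta> "\<Prod>w\<in>ge. val w"]
      by (simp add: f1_def f2_def p_def)
  qed
  have "exp (\<beta> * (\<Sum>ge\<in>GE. \<Prod>w\<in>ge. S w * val w)) = (\<Prod>ge\<in>GE. exp (\<beta> * (\<Prod>w\<in>ge. S w * val w)))"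
    by (simp add: sum_distrib_left exp_sum fin)
  also have "\<dots> = (\<Prod>ge\<in>GE. f1 ge + f2 ge)" by (rule prod.cong) (simp_all add: each)
  also have "\<dots> = (\<Sum>X\<in>Pow GE. (\<Prod>ge\<in>X. f1 ge) * (\<Prod>ge\<in>GE - X. f2 ge))" by (rule prod_add[OF fin])
  also have "\<dots> = (\<Sum>\<omega>\<in>Pow GE. if compatible S \<omega> then (\<Prod>ge\<in>GE. edge_factor (p ge) (ge \<in> \<omega>)) else 0)"
  proof (rule sum.cong[OF refl])
    fix X assume X: "X \<in> Pow GE"
    then have XG: "X \<subseteq> GE" by simp
    have finX: "finite X" using XG fin by (rule finite_subset)
    have cc: "(\<forall>ge\<in>X. c ge) \<longleftrightarrow> compatible S X"
    proof
      assume h: "\<forall>ge\<in>X. c ge"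
      show "compatible S X" unfolding compatible_def
      proof (intro allI impI)
        fix u v assume "{u, v} \<in> X"
        with h have "c {u, v}" by (rule bspec)
        then have cu: "\<forall>a\<in>{u, v}. \<forall>b\<in>{u, v}. S a = S b" unfolding c_def .
        have "u \<in> {u, v}" "v \<in> {u, v}" by simp_all
        then show "S u = S v" using cu by blast
      qed
    next
      assume h: "compatible S X"
      show "\<forall>ge\<in>X. c ge"
      proof
        fix ge assume ge: "ge \<in> X"
        have "ge \<in> GE" using XG ge by (rule subsetD)
        then obtain u v where uv: "ge = {u, v}" using form by metis
        then have "S u = S v" using h ge by (simp add: compatible_def)
        then show "c ge" unfolding uv c_def by simp
      qed
    qed
    show "(\<Prod>ge\<in>X. f1 ge) * (\<Prod>ge\<in>GE - X. f2 ge) =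
      (if compatible S X then (\<Prod>ge\<in>GE. edge_factor (p ge) (ge \<in> X)) else 0)"
    proof (cases "compatible S X")
      case True
      then have "(\<Prod>ge\<in>X. f1 ge) = (\<Prod>ge\<in>X. edge_factor (p ge) (ge \<in> X))"
        using cc by (intro prod.cong) (auto simp: f1_def)
      moreover have "(\<Prod>ge\<in>GE - X. f2 ge) = (\<Prod>ge\<in>GE - X. edge_factor (p ge) (ge \<in> X))"
        by (intro prod.cong) (auto simp: f2_def)
      moreover have "(\<Prod>ge\<in>GE. edge_factor (p ge) (ge \<in> X)) =
          (\<Prod>ge\<in>GE - X. edge_factor (p ge) (ge \<in> X)) * (\<Prod>ge\<in>X. edge_factor (p ge) (ge \<in> X))"
        by (rule prod.subset_diff[OF XG fin])
      ultimately show ?thesis using True by simp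
    next
      case False
      then obtain ge where ge: "ge \<in> X" "\<not> c ge" using cc by blast
      then have "f1 ge = 0" by (simp add: f1_def)
      then have "(\<Prod>ge\<in>X. f1 ge) = 0" using ge(1) finX by (metis prod_zero_iff)
      then show ?thesis using False by simp
    qed
  qed
  finally show ?thesis unfolding p_def .
qed



definition W0 :: "nat \<Rightarrow> nat \<Rightarrow> nat \<Rightarrow> real \<Rightarrow> (vtx \<Rightarrow> real) \<Rightarrow> vtx set set \<Rightarrow> real" where
  "W0 d L M \<beta> val \<omega> = (\<Prod>ge\<in>ghost_edges d L M. edge_factor (1 - exp (- 2 * \<beta> * (\<Prod>w\<in>ge. val w))) (ge \<in> \<omega>))"

definition Fint :: "nat \<Rightarrow> (nat \<Rightarrow> int) set \<Rightarrow> real \<Rightarrow> ((nat \<Rightarrow> int) \<Rightarrow> real) \<Rightarrow> ((nat \<Rightarrow> int) \<Rightarrow> real) \<Rightarrow> real" where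
  "Fint d \<Lambda> \<beta> h \<phi> = exp (\<beta> * (\<Sum>e\<in>nn_edges d \<Lambda>. \<Prod>v\<in>e. \<phi> v) + \<beta> * (\<Sum>x\<in>\<Lambda>. h x * \<phi> x))"

lemma finite_spins: "finite (box d L M \<rightarrow>\<^sub>E {-1, 1::real})"
  using finite_box by (intro finite_PiE) auto

lemma sigma_sum:
  assumes m: "m \<in> {-1, 1}"
  shows "(\<Sum>\<sigma>\<in>box d L M \<rightarrow>\<^sub>E {-1, 1::real}. exp (\<beta> * (\<Sum>ge\<in>ghost_edges d L M. \<Prod>w\<in>ge. spin m \<sigma> w * val w)))
    = (\<Sum>\<omega>\<in>Pow (ghost_edges d L M). W0 d L M \<beta> val \<omega> * card {\<sigma> \<in> box d L M \<rightarrow>\<^sub>E {-1, 1::real}. compatible (spin m \<sigma>) \<omega>})"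
proof -
  let ?S = "box d L M \<rightarrow>\<^sub>E {-1, 1::real}"
  let ?GE = "ghost_edges d L M"
  have "(\<Sum>\<sigma>\<in>?S. exp (\<beta> * (\<Sum>ge\<in>?GE. \<Prod>w\<in>ge. spin m \<sigma> w * val w)))
      = (\<Sum>\<sigma>\<in>?S. \<Sum>\<omega>\<in>Pow ?GE. if compatible (spin m \<sigma>) \<omega> then W0 d L M \<beta> val \<omega> else 0)"
  proof (rule sum.cong[OF refl])
    fix \<sigma> assume \<sigma>: "\<sigma> \<in> ?S"
    have form: "\<exists>u v. ge = {u, v} \<and> u \<noteq> v \<and> spin m \<sigma> u \<in> {-1, 1} \<and> spin m \<sigma> v \<in> {-1, 1}"
      if ge: "ge \<in> ?GE" for ge
    proof -
      obtain u v where uv: "ge = {u, v}" "u \<noteq> v" "u \<in> V ` box d L M \<union> {Gp, Gm}" "v \<in> V ` box d L M \<union> {Gp, Gm}"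
        using ghost_edge_form[OF ge] by metis
      have "spin m \<sigma> u \<in> {-1, 1}" "spin m \<sigma> v \<in> {-1, 1}" using spin_in[OF \<sigma> _ m] uv by blast+
      then show ?thesis using uv by blast
    qed
    show "exp (\<beta> * (\<Sum>ge\<in>?GE. \<Prod>w\<in>ge. spin m \<sigma> w * val w)) =
      (\<Sum>\<omega>\<in>Pow ?GE. if compatible (spin m \<sigma>) \<omega> then W0 d L M \<beta> val \<omega> else 0)"
      unfolding W0_def by (rule expansion[OF finite_ghost_edges form])
  qed
  also have "\<dots> = (\<Sum>\<omega>\<in>Pow ?GE. \<Sum>\<sigma>\<in>?S. if compatible (spin m \<sigma>) \<omega> then W0 d L M \<beta> val \<omega> else 0)"
    by (rule sum.swap)
  also have "\<dots> = (\<Sum>\<omega>\<in>Pow ?GE. W0 d L M \<beta> val \<omega> * card {\<sigma> \<in> ?S. compatible (spin m \<sigma>) \<omega>})"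
  proof (rule sum.cong[OF refl])
    fix \<omega>
    have "(\<Sum>\<sigma>\<in>?S. if compatible (spin m \<sigma>) \<omega> then W0 d L M \<beta> val \<omega> else 0)
        = (\<Sum>\<sigma>\<in>{\<sigma> \<in> ?S. compatible (spin m \<sigma>) \<omega>}. W0 d L M \<beta> val \<omega>)"
      by (rule sum.inter_filter[symmetric, OF finite_spins])
    then show "(\<Sum>\<sigma>\<in>?S. if compatible (spin m \<sigma>) \<omega> then W0 d L M \<beta> val \<omega> else 0)
        = W0 d L M \<beta> val \<omega> * card {\<sigma> \<in> ?S. compatible (spin m \<sigma>) \<omega>}"
      by (simp add: mult.commute)
  qed
  finally show ?thesis .
qed

lemma inj_V: "inj V" by (auto simp: inj_def)

lemma GE_parts:
  "ghost_edges d L M = ((\<lambda>e. V ` e) ` nn_edges d (box d L M) \<union> (\<lambda>x. {V x, Gp}) ` thick_top d L M) \<union> (\<lambda>x. {V x, Gm}) ` thick_bot d L M"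
  "((\<lambda>e. V ` e) ` nn_edges d (box d L M) \<union> (\<lambda>x. {V x, Gp}) ` thick_top d L M) \<inter> (\<lambda>x. {V x, Gm}) ` thick_bot d L M = {}"
  "(\<lambda>e. V ` e) ` nn_edges d (box d L M) \<inter> (\<lambda>x. {V x, Gp}) ` thick_top d L M = {}"
  "inj_on (\<lambda>e. V ` e) (nn_edges d (box d L M))"
  "inj_on (\<lambda>x. {V x, Gp}) (thick_top d L M)"
  "inj_on (\<lambda>x. {V x, Gm}) (thick_bot d L M)"
proof -
  show "ghost_edges d L M = ((\<lambda>e. V ` e) ` nn_edges d (box d L M) \<union> (\<lambda>x. {V x, Gp}) ` thick_top d L M) \<union> (\<lambda>x. {V x, Gm}) ` thick_bot d L M"
    by (simp add: ghost_edges_def)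
  have a: "Gm \<notin> V ` e" "Gp \<notin> V ` e" for e by auto
  show "((\<lambda>e. V ` e) ` nn_edges d (box d L M) \<union> (\<lambda>x. {V x, Gp}) ` thick_top d L M) \<inter> (\<lambda>x. {V x, Gm}) ` thick_bot d L M = {}"
  proof -
    have "{V x, Gm} \<noteq> V ` e" for x e using a by blast
    moreover have "{V x, Gm} \<noteq> {V y, Gp}" for x y
    proof
      assume "{V x, Gm} = {V y, Gp}"
      then have "Gm \<in> {V y, Gp}" by blast
      then show False by simp
    qed
    ultimately show ?thesis by blast
  qed
  show "(\<lambda>e. V ` e) ` nn_edges d (box d L M) \<inter> (\<lambda>x. {V x, Gp}) ` thick_top d L M = {}"
  proof -
    have "{V x, Gp} \<noteq> V ` e" for x e using a by blast
    then show ?thesis by blast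
  qed
  show "inj_on (\<lambda>e. V ` e) (nn_edges d (box d L M))"
    by (rule inj_onI) (simp add: inj_image_eq_iff[OF inj_V])
  show "inj_on (\<lambda>x. {V x, Gp}) (thick_top d L M)"
  proof (rule inj_onI)
    fix x y assume "{V x, Gp} = {V y, Gp}"
    then have "V x \<in> {V y, Gp}" by blast
    then show "x = y" by simp
  qed
  show "inj_on (\<lambda>x. {V x, Gm}) (thick_bot d L M)"
  proof (rule inj_onI)
    fix x y assume "{V x, Gm} = {V y, Gm}"
    then have "V x \<in> {V y, Gm}" by blast
    then show "x = y" by simp
  qed
qed

lemma fin_parts: "finite (nn_edges d (box d L M))" "finite (thick_top d L M)" "finite (thick_bot d L M)"
  using finite_nn_edges[OF finite_box] finite_subset[OF thick_facts(1) finite_box]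
    finite_subset[OF thick_facts(2) finite_box] by auto

lemma sum_GE:
  "(\<Sum>ge\<in>ghost_edges d L M. Q ge) = (\<Sum>e\<in>nn_edges d (box d L M). Q (V ` e))
     + (\<Sum>x\<in>thick_top d L M. Q {V x, Gp}) + (\<Sum>x\<in>thick_bot d L M. Q {V x, Gm})"
  unfolding GE_parts(1)
  apply (subst sum.union_disjoint)
     apply (use fin_parts GE_parts(2) in auto)[3]
  apply (subst sum.union_disjoint)
     apply (use fin_parts GE_parts(3) in auto)[3]
  apply (simp add: sum.reindex GE_parts(4-6))
  done

lemma prod_GE:
  "(\<Prod>ge\<in>ghost_edges d L M. Q ge) = (\<Prod>e\<in>nn_edges d (box d L M). Q (V ` e))
     * (\<Prod>x\<in>thick_top d L M. Q {V x, Gp}) * (\<Prod>x\<in>thick_bot d L M. Q {V x, Gm})"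
  unfolding GE_parts(1)
  apply (subst prod.union_disjoint)
     apply (use fin_parts GE_parts(2) in auto)[3]
  apply (subst prod.union_disjoint)
     apply (use fin_parts GE_parts(3) in auto)[3]
  apply (simp add: prod.reindex GE_parts(4-6))
  done



lemma prod_V_image: "(\<Prod>w\<in>V ` e. f w) = (\<Prod>v\<in>e. f (V v))"
  using prod.reindex[of V e f] inj_V by (simp add: inj_on_def)

lemma energy_core:
  "(\<Sum>ge\<in>ghost_edges d L M. \<Prod>w\<in>ge. spin m \<sigma> w * spin 1 a w) =
    (\<Sum>e\<in>nn_edges d (box d L M). \<Prod>v\<in>e. \<sigma> v * a v) + (\<Sum>x\<in>thick_top d L M. \<sigma> x * a x)
     + m * (\<Sum>x\<in>thick_bot d L M. \<sigma> x * a x)"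
  unfolding sum_GE by (simp add: prod_V_image sum_distrib_left mult.commute mult.left_commute)

lemma field_pp: "(\<Sum>x\<in>box d L M. h_pp d L M x * \<phi> x) = (\<Sum>x\<in>thick_top d L M. \<phi> x) + (\<Sum>x\<in>thick_bot d L M. \<phi> x)"
proof -
  have "(\<Sum>x\<in>box d L M. h_pp d L M x * \<phi> x) = (\<Sum>x\<in>box d L M. if x \<in> thick_bdry d L M then \<phi> x else 0)"
    by (rule sum.cong) (auto simp: h_pp_def)
  also have "\<dots> = (\<Sum>x\<in>box d L M \<inter> thick_bdry d L M. \<phi> x)"
    by (rule sum.inter_restrict[symmetric, OF finite_box])
  also have "box d L M \<inter> thick_bdry d L M = thick_top d L M \<union> thick_bot d L M"
    using thick_facts by blast
  also have "(\<Sum>x\<in>thick_top d L M \<union> thick_bot d L M. \<phi> x) = (\<Sum>x\<in>thick_top d L M. \<phi> x) + (\<Sum>x\<in>thick_bot d L M. \<phi> x)"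
    by (rule sum.union_disjoint) (use fin_parts thick_facts in auto)
  finally show ?thesis .
qed

lemma field_pm: "(\<Sum>x\<in>box d L M. h_pm d L M x * \<phi> x) = (\<Sum>x\<in>thick_top d L M. \<phi> x) - (\<Sum>x\<in>thick_bot d L M. \<phi> x)"
proof -
  have "(\<Sum>x\<in>box d L M. h_pm d L M x * \<phi> x) = (\<Sum>x\<in>box d L M. (if x \<in> thick_top d L M then \<phi> x else 0) - (if x \<in> thick_bot d L M then \<phi> x else 0))"
    by (rule sum.cong) (auto simp: h_pm_def)
  also have "\<dots> = (\<Sum>x\<in>box d L M. if x \<in> thick_top d L M then \<phi> x else 0) - (\<Sum>x\<in>box d L M. if x \<in> thick_bot d L M then \<phi> x else 0)"
    by (rule sum_subtractf)
  also have "\<dots> = (\<Sum>x\<in>box d L M \<inter> thick_top d L M. \<phi> x) - (\<Sum>x\<in>box d L M \<inter> thick_bot d L M. \<phi> x)"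
    by (simp add: sum.inter_restrict[OF finite_box])
  also have "box d L M \<inter> thick_top d L M = thick_top d L M"
    using thick_facts by blast
  also have "box d L M \<inter> thick_bot d L M = thick_bot d L M"
    using thick_facts by blast
  finally show ?thesis .
qed

lemma energy_pp:
  "Fint d (box d L M) \<beta> (h_pp d L M) (\<lambda>x. \<sigma> x * a x) =
     exp (\<beta> * (\<Sum>ge\<in>ghost_edges d L M. \<Prod>w\<in>ge. spin 1 \<sigma> w * spin 1 a w))"
  unfolding Fint_def energy_core field_pp by (simp add: algebra_simps)

lemma energy_pm:
  "Fint d (box d L M) \<beta> (h_pm d L M) (\<lambda>x. \<sigma> x * a x) =
     exp (\<beta> * (\<Sum>ge\<in>ghost_edges d L M. \<Prod>w\<in>ge. spin (-1) \<sigma> w * spin 1 a w))"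
  unfolding Fint_def energy_core field_pm by (simp add: algebra_simps)

lemma rc_weight_W0:
  "rc_weight d L M \<beta> \<omega> a = W0 d L M \<beta> (spin 1 a) \<omega> * 2 ^ k_tilde d L M \<omega>"
proof -
  have t: "(\<Prod>x\<in>thick_top d L M. edge_factor (1 - exp (- 2 * \<beta> * h_pp d L M x * a x)) ({V x, Gp} \<in> \<omega>))
      = (\<Prod>x\<in>thick_top d L M. edge_factor (1 - exp (- 2 * \<beta> * (\<Prod>w\<in>{V x, Gp}. spin 1 a w))) ({V x, Gp} \<in> \<omega>))"
    by (rule prod.cong) (auto simp: h_pp_def thick_top_def)
  have b: "(\<Prod>x\<in>thick_bot d L M. edge_factor (1 - exp (- 2 * \<beta> * h_pp d L M x * a x)) ({V x, Gm} \<in> \<omega>))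
      = (\<Prod>x\<in>thick_bot d L M. edge_factor (1 - exp (- 2 * \<beta> * (\<Prod>w\<in>{V x, Gm}. spin 1 a w))) ({V x, Gm} \<in> \<omega>))"
    by (rule prod.cong) (auto simp: h_pp_def thick_bot_def)
  show ?thesis
    unfolding rc_weight_def W0_def prod_GE t b by (simp add: prod_V_image)
qed

lemma PW_pp:
  "2 * (\<Sum>\<sigma>\<in>box d L M \<rightarrow>\<^sub>E {-1, 1::real}. Fint d (box d L M) \<beta> (h_pp d L M) (\<lambda>x. \<sigma> x * a x))
    = (\<Sum>\<omega>\<in>Pow (ghost_edges d L M). rc_weight d L M \<beta> \<omega> a)"
proof -
  have "2 * (\<Sum>\<sigma>\<in>box d L M \<rightarrow>\<^sub>E {-1, 1::real}. Fint d (box d L M) \<beta> (h_pp d L M) (\<lambda>x. \<sigma> x * a x))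
     = 2 * (\<Sum>\<omega>\<in>Pow (ghost_edges d L M). W0 d L M \<beta> (spin 1 a) \<omega> * card {\<sigma> \<in> box d L M \<rightarrow>\<^sub>E {-1, 1::real}. compatible (spin 1 \<sigma>) \<omega>})"
    unfolding energy_pp by (subst sigma_sum) simp_all
  also have "\<dots> = (\<Sum>\<omega>\<in>Pow (ghost_edges d L M). W0 d L M \<beta> (spin 1 a) \<omega> * real (2 * card {\<sigma> \<in> box d L M \<rightarrow>\<^sub>E {-1, 1::real}. compatible (spin 1 \<sigma>) \<omega>}))"
    by (simp add: sum_distrib_left algebra_simps)
  also have "\<dots> = (\<Sum>\<omega>\<in>Pow (ghost_edges d L M). rc_weight d L M \<beta> \<omega> a)"
  proof (rule sum.cong[OF refl])
    fix \<omega> assume "\<omega> \<in> Pow (ghost_edges d L M)"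
    then have "2 * card {\<sigma> \<in> box d L M \<rightarrow>\<^sub>E {-1, 1::real}. compatible (spin 1 \<sigma>) \<omega>} = 2 ^ k_tilde d L M \<omega>"
      by (intro pp_count) simp
    then show "W0 d L M \<beta> (spin 1 a) \<omega> * real (2 * card {\<sigma> \<in> box d L M \<rightarrow>\<^sub>E {-1, 1::real}. compatible (spin 1 \<sigma>) \<omega>})
      = rc_weight d L M \<beta> \<omega> a"
      unfolding rc_weight_W0 by simp
  qed
  finally show ?thesis .
qed

lemma PW_pm:
  "2 * (\<Sum>\<sigma>\<in>box d L M \<rightarrow>\<^sub>E {-1, 1::real}. Fint d (box d L M) \<beta> (h_pm d L M) (\<lambda>x. \<sigma> x * a x))
    = (\<Sum>\<omega>\<in>Pow (ghost_edges d L M). if ghosts_connected \<omega> then 0 else rc_weight d L M \<beta> \<omega> a)"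
proof -
  have "2 * (\<Sum>\<sigma>\<in>box d L M \<rightarrow>\<^sub>E {-1, 1::real}. Fint d (box d L M) \<beta> (h_pm d L M) (\<lambda>x. \<sigma> x * a x))
     = 2 * (\<Sum>\<omega>\<in>Pow (ghost_edges d L M). W0 d L M \<beta> (spin 1 a) \<omega> * card {\<sigma> \<in> box d L M \<rightarrow>\<^sub>E {-1, 1::real}. compatible (spin (-1) \<sigma>) \<omega>})"
    unfolding energy_pm by (subst sigma_sum) simp_all
  also have "\<dots> = (\<Sum>\<omega>\<in>Pow (ghost_edges d L M). W0 d L M \<beta> (spin 1 a) \<omega> * real (2 * card {\<sigma> \<in> box d L M \<rightarrow>\<^sub>E {-1, 1::real}. compatible (spin (-1) \<sigma>) \<omega>}))"
    by (simp add: sum_distrib_left algebra_simps)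
  also have "\<dots> = (\<Sum>\<omega>\<in>Pow (ghost_edges d L M). if ghosts_connected \<omega> then 0 else rc_weight d L M \<beta> \<omega> a)"
  proof (rule sum.cong[OF refl])
    fix \<omega> assume "\<omega> \<in> Pow (ghost_edges d L M)"
    then have \<omega>: "\<omega> \<subseteq> ghost_edges d L M" by simp
    have "2 * card {\<sigma> \<in> box d L M \<rightarrow>\<^sub>E {-1, 1::real}. compatible (spin (-1) \<sigma>) \<omega>} =
        (if ghosts_connected \<omega> then 0 else 2 ^ k_tilde d L M \<omega>)"
      using pm_count[OF \<omega>] pp_count[OF \<omega>] by simp
    then show "W0 d L M \<beta> (spin 1 a) \<omega> * real (2 * card {\<sigma> \<in> box d L M \<rightarrow>\<^sub>E {-1, 1::real}. compatible (spin (-1) \<sigma>) \<omega>})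
      = (if ghosts_connected \<omega> then 0 else rc_weight d L M \<beta> \<omega> a)"
      unfolding rc_weight_W0 by simp
  qed
  finally show ?thesis .
qed



lemma meas_ef: assumes [measurable]: "f \<in> borel_measurable M" shows "(\<lambda>x. edge_factor (f x) b) \<in> borel_measurable M"
proof (cases b)
  case True then show ?thesis unfolding edge_factor_def by simp
next
  case False then show ?thesis unfolding edge_factor_def by simp
qed

lemma meas_1mexp: assumes [measurable]: "g \<in> borel_measurable M" shows "(\<lambda>x. 1 - exp (c * g x :: real)) \<in> borel_measurable M"
  by measurable

lemma meas_exp2: assumes [measurable]: "f \<in> borel_measurable M" "g \<in> borel_measurable M"
  shows "(\<lambda>x. exp (\<beta> * f x + \<beta> * g x :: real)) \<in> borel_measurable M"
  by measurable

lemma meas_comp: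
  assumes "sets N = sets (borel :: real measure)" "v \<in> I"
  shows "(\<lambda>aa. aa v) \<in> borel_measurable (PiM I (\<lambda>_. N))"
proof -
  have "measurable (PiM I (\<lambda>_. N)) N = measurable (PiM I (\<lambda>_. N)) borel"
    by (rule measurable_cong_sets) (simp_all add: assms(1))
  then show ?thesis using measurable_component_singleton[OF assms(2), of "\<lambda>_. N"] by simp
qed

lemma edge_sub: "e \<in> nn_edges d \<Lambda> \<Longrightarrow> v \<in> e \<Longrightarrow> v \<in> \<Lambda>"
  using nn_edge_form by blast

lemma meas_rc:
  assumes N: "sets N = sets (borel :: real measure)"
  shows "(\<lambda>aa. rc_weight d L M \<beta> \<omega> aa) \<in> borel_measurable (PiM (box d L M) (\<lambda>_. N))"
  unfolding rc_weight_def
  apply (intro borel_measurable_times borel_measurable_prod meas_ef meas_1mexp borel_measurable_const meas_comp[OF N])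
  using thick_facts(1,2)[of d L M] by (auto dest: edge_sub)

lemma meas_Fint:
  assumes N: "sets N = sets (borel :: real measure)"
  shows "(\<lambda>\<phi>. Fint d \<Lambda> \<beta> h \<phi>) \<in> borel_measurable (PiM \<Lambda> (\<lambda>_. N))"
  unfolding Fint_def
  apply (intro meas_exp2 borel_measurable_sum borel_measurable_prod borel_measurable_times borel_measurable_const meas_comp[OF N])
  by (auto dest: edge_sub)



lemma Fint_cong:
  assumes "\<And>x. x \<in> \<Lambda> \<Longrightarrow> \<phi> x = \<psi> x"
  shows "Fint d \<Lambda> \<beta> h \<phi> = Fint d \<Lambda> \<beta> h \<psi>"
proof -
  have "(\<Sum>e\<in>nn_edges d \<Lambda>. \<Prod>v\<in>e. \<phi> v) = (\<Sum>e\<in>nn_edges d \<Lambda>. \<Prod>v\<in>e. \<psi> v)"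
    using assms by (intro sum.cong prod.cong refl) (auto dest: edge_sub)
  moreover have "(\<Sum>x\<in>\<Lambda>. h x * \<phi> x) = (\<Sum>x\<in>\<Lambda>. h x * \<psi> x)"
    using assms by (intro sum.cong) auto
  ultimately show ?thesis by (simp add: Fint_def)
qed

lemma Fint_nonneg: "Fint d \<Lambda> \<beta> h \<phi> \<ge> 0"
  by (simp add: Fint_def)

lemma card_spins: "finite \<Lambda> \<Longrightarrow> card (\<Lambda> \<rightarrow>\<^sub>E {-1, 1::real}) = 2 ^ card \<Lambda>"
  by (simp add: card_PiE numeral_2_eq_2)

lemma meas_flip:
  assumes g: "g > 0"
  shows "(\<lambda>\<phi>. \<lambda>x\<in>\<Lambda>. \<tau> x * \<phi> x) \<in> PiM \<Lambda> (\<lambda>_. rho g a) \<rightarrow>\<^sub>M PiM \<Lambda> (\<lambda>_. rho g a)"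
proof (rule measurable_restrict)
  fix x assume x: "x \<in> \<Lambda>"
  have "measurable (PiM \<Lambda> (\<lambda>_. rho g a)) (rho g a) = measurable (PiM \<Lambda> (\<lambda>_. rho g a)) borel"
    by (rule measurable_cong_sets) simp_all
  moreover have "(\<lambda>\<phi>. \<tau> x * \<phi> x) \<in> borel_measurable (PiM \<Lambda> (\<lambda>_. rho g a))"
    by (intro borel_measurable_times borel_measurable_const meas_comp[OF sets_rho x])
  ultimately show "(\<lambda>\<phi>. \<tau> x * \<phi> x) \<in> PiM \<Lambda> (\<lambda>_. rho g a) \<rightarrow>\<^sub>M rho g a" by simp
qed

lemma symmetrize:
  assumes g: "g > 0" and fin: "finite \<Lambda>"
  shows "(\<integral>\<^sup>+\<phi>. ennreal (Fint d \<Lambda> \<beta> h \<phi>) \<partial>PiM \<Lambda> (\<lambda>_. rho g a)) * of_nat (2 ^ card \<Lambda>) =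
    (\<integral>\<^sup>+\<phi>. ennreal (\<Sum>\<sigma>\<in>\<Lambda> \<rightarrow>\<^sub>E {-1, 1::real}. Fint d \<Lambda> \<beta> h (\<lambda>x. \<sigma> x * \<bar>\<phi> x\<bar>)) \<partial>PiM \<Lambda> (\<lambda>_. rho g a))"
proof -
  let ?P = "PiM \<Lambda> (\<lambda>_. rho g a)"
  let ?Sg = "\<Lambda> \<rightarrow>\<^sub>E {-1, 1::real}"
  define G where "G \<phi> = ennreal (Fint d \<Lambda> \<beta> h \<phi>)" for \<phi>
  define fl where "fl \<tau> \<phi> = (\<lambda>x\<in>\<Lambda>. \<tau> x * \<phi> x)" for \<tau> \<phi> :: "(nat \<Rightarrow> int) \<Rightarrow> real"
  have Gm: "G \<in> borel_measurable ?P"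
    unfolding G_def using meas_Fint[OF sets_rho] by simp
  have flm: "fl \<tau> \<in> ?P \<rightarrow>\<^sub>M ?P" for \<tau> unfolding fl_def by (rule meas_flip[OF g])
  have inv: "integral\<^sup>N ?P G = (\<integral>\<^sup>+\<phi>. G (fl \<tau> \<phi>) \<partial>?P)" if \<tau>: "\<tau> \<in> ?Sg" for \<tau>
  proof -
    have "?P = distr ?P ?P (fl \<tau>)" unfolding fl_def by (rule PiM_flip[OF fin g \<tau>, symmetric])
    then have "integral\<^sup>N ?P G = integral\<^sup>N (distr ?P ?P (fl \<tau>)) G" by simp
    also have "\<dots> = (\<integral>\<^sup>+\<phi>. G (fl \<tau> \<phi>) \<partial>?P)"
      by (rule nn_integral_distr[OF flm]) (simp add: Gm)
    finally show ?thesis .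
  qed
  have "integral\<^sup>N ?P G * of_nat (2 ^ card \<Lambda>) = (\<Sum>\<tau>\<in>?Sg. integral\<^sup>N ?P G)"
    using card_spins[OF fin] by (simp add: mult.commute)
  also have "\<dots> = (\<Sum>\<tau>\<in>?Sg. \<integral>\<^sup>+\<phi>. G (fl \<tau> \<phi>) \<partial>?P)"
    by (rule sum.cong) (simp_all add: inv)
  also have "\<dots> = (\<integral>\<^sup>+\<phi>. (\<Sum>\<tau>\<in>?Sg. G (fl \<tau> \<phi>)) \<partial>?P)"
    by (rule nn_integral_sum[symmetric]) (rule measurable_compose[OF flm Gm])
  also have "\<dots> = (\<integral>\<^sup>+\<phi>. ennreal (\<Sum>\<sigma>\<in>?Sg. Fint d \<Lambda> \<beta> h (\<lambda>x. \<sigma> x * \<bar>\<phi> x\<bar>)) \<partial>?P)"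
  proof (rule nn_integral_cong)
    fix \<phi> :: "(nat \<Rightarrow> int) \<Rightarrow> real"
    define sg where "sg x = (if \<phi> x < 0 then -1 else (1::real))" for x
    have sg2: "sg x * sg x = 1" for x by (simp add: sg_def)
    have sgabs: "sg x * \<bar>\<phi> x\<bar> = \<phi> x" for x by (simp add: sg_def)
    define j where "j \<tau> = (\<lambda>x\<in>\<Lambda>. \<tau> x * sg x)" for \<tau> :: "(nat \<Rightarrow> int) \<Rightarrow> real"
    have jj: "j (j \<tau>) = \<tau>" if "\<tau> \<in> ?Sg" for \<tau>
    proof -
      have "j (j \<tau>) = restrict \<tau> \<Lambda>" unfolding j_def
        by (rule restrict_ext) (simp add: mult.assoc sg2)
      also have "\<dots> = \<tau>" using that by (rule PiE_restrict)
      finally show ?thesis .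
    qed
    have jS: "j \<tau> \<in> ?Sg" if "\<tau> \<in> ?Sg" for \<tau>
      using that by (auto simp: j_def sg_def PiE_iff)
    have "(\<Sum>\<tau>\<in>?Sg. Fint d \<Lambda> \<beta> h (fl \<tau> \<phi>)) = (\<Sum>\<sigma>\<in>?Sg. Fint d \<Lambda> \<beta> h (\<lambda>x. \<sigma> x * \<bar>\<phi> x\<bar>))"
    proof (rule sum.reindex_bij_witness[where i=j and j=j])
      fix \<tau> assume \<tau>: "\<tau> \<in> ?Sg"
      show "j (j \<tau>) = \<tau>" using jj[OF \<tau>] .
      show "j \<tau> \<in> ?Sg" using jS[OF \<tau>] .
      show "Fint d \<Lambda> \<beta> h (\<lambda>x. j \<tau> x * \<bar>\<phi> x\<bar>) = Fint d \<Lambda> \<beta> h (fl \<tau> \<phi>)"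
        by (rule Fint_cong) (simp add: j_def fl_def mult.assoc sgabs)
    qed (use jj jS in auto)
    then show "(\<Sum>\<tau>\<in>?Sg. G (fl \<tau> \<phi>)) = ennreal (\<Sum>\<sigma>\<in>?Sg. Fint d \<Lambda> \<beta> h (\<lambda>x. \<sigma> x * \<bar>\<phi> x\<bar>))"
      unfolding G_def by (simp add: Fint_nonneg)
  qed
  finally show ?thesis unfolding G_def .
qed



lemma rc_weight_cong:
  assumes "\<And>x. x \<in> box d L M \<Longrightarrow> a x = b x"
  shows "rc_weight d L M \<beta> \<omega> a = rc_weight d L M \<beta> \<omega> b"
proof -
  have 1: "(\<Prod>e\<in>nn_edges d (box d L M). edge_factor (1 - exp (- 2 * \<beta> * (\<Prod>v\<in>e. a v))) (V ` e \<in> \<omega>))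
      = (\<Prod>e\<in>nn_edges d (box d L M). edge_factor (1 - exp (- 2 * \<beta> * (\<Prod>v\<in>e. b v))) (V ` e \<in> \<omega>))"
  proof (rule prod.cong[OF refl])
    fix e assume e: "e \<in> nn_edges d (box d L M)"
    have "(\<Prod>v\<in>e. a v) = (\<Prod>v\<in>e. b v)" using assms edge_sub[OF e] by (intro prod.cong) auto
    then show "edge_factor (1 - exp (- 2 * \<beta> * (\<Prod>v\<in>e. a v))) (V ` e \<in> \<omega>) =
        edge_factor (1 - exp (- 2 * \<beta> * (\<Prod>v\<in>e. b v))) (V ` e \<in> \<omega>)" by simp
  qed
  have 2: "(\<Prod>x\<in>thick_top d L M. edge_factor (1 - exp (- 2 * \<beta> * h_pp d L M x * a x)) ({V x, Gp} \<in> \<omega>))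
     = (\<Prod>x\<in>thick_top d L M. edge_factor (1 - exp (- 2 * \<beta> * h_pp d L M x * b x)) ({V x, Gp} \<in> \<omega>))"
    using assms thick_facts(1)[of d L M] by (intro prod.cong) auto
  have 3: "(\<Prod>x\<in>thick_bot d L M. edge_factor (1 - exp (- 2 * \<beta> * h_pp d L M x * a x)) ({V x, Gm} \<in> \<omega>))
     = (\<Prod>x\<in>thick_bot d L M. edge_factor (1 - exp (- 2 * \<beta> * h_pp d L M x * b x)) ({V x, Gm} \<in> \<omega>))"
    using assms thick_facts(2)[of d L M] by (intro prod.cong) auto
  show ?thesis unfolding rc_weight_def 1 2 3 ..
qed

lemma ef_nonneg: "c \<le> 0 \<Longrightarrow> edge_factor (1 - exp c) b \<ge> 0"
  by (simp add: edge_factor_def)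

lemma rc_weight_nonneg:
  assumes \<beta>: "\<beta> \<ge> 0" and a: "\<And>x. x \<in> box d L M \<Longrightarrow> a x \<ge> 0"
  shows "rc_weight d L M \<beta> \<omega> a \<ge> 0"
proof -
  have h: "h_pp d L M x \<ge> 0" for x by (simp add: h_pp_def)
  have 1: "edge_factor (1 - exp (- 2 * \<beta> * (\<Prod>v\<in>e. a v))) bb \<ge> 0" if e: "e \<in> nn_edges d (box d L M)" for e bb
  proof (rule ef_nonneg)
    have "(\<Prod>v\<in>e. a v) \<ge> 0" using a edge_sub[OF e] by (intro prod_nonneg) auto
    then show "- 2 * \<beta> * (\<Prod>v\<in>e. a v) \<le> 0" using \<beta> by (simp add: mult_nonneg_nonneg)
  qed
  have 2: "edge_factor (1 - exp (- 2 * \<beta> * h_pp d L M x * a x)) bb \<ge> 0" if "x \<in> box d L M" for x bb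
  proof (rule ef_nonneg)
    have "\<beta> * h_pp d L M x * a x \<ge> 0" using \<beta> h a[OF that] by (simp add: mult_nonneg_nonneg)
    then show "- 2 * \<beta> * h_pp d L M x * a x \<le> 0" by linarith
  qed
  show ?thesis unfolding rc_weight_def
    using 1 2 thick_facts(1,2)[of d L M]
    by (intro mult_nonneg_nonneg prod_nonneg zero_le_power) auto
qed

lemma meas_abs:
  assumes g: "g > 0"
  shows "(\<lambda>\<phi>. \<lambda>x\<in>\<Lambda>. \<bar>\<phi> x\<bar>) \<in> PiM \<Lambda> (\<lambda>_. rho g a) \<rightarrow>\<^sub>M PiM \<Lambda> (\<lambda>_. rho g a)"
proof (rule measurable_restrict)
  fix x assume x: "x \<in> \<Lambda>"
  have "measurable (PiM \<Lambda> (\<lambda>_. rho g a)) (rho g a) = measurable (PiM \<Lambda> (\<lambda>_. rho g a)) borel"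
    by (rule measurable_cong_sets) simp_all
  moreover have "(\<lambda>\<phi>. \<bar>\<phi> x\<bar>) \<in> borel_measurable (PiM \<Lambda> (\<lambda>_. rho g a))"
    by (intro borel_measurable_abs meas_comp[OF sets_rho x])
  ultimately show "(\<lambda>\<phi>. \<bar>\<phi> x\<bar>) \<in> PiM \<Lambda> (\<lambda>_. rho g a) \<rightarrow>\<^sub>M rho g a" by simp
qed

lemma prob_P: "g > 0 \<Longrightarrow> prob_space (PiM \<Lambda> (\<lambda>_. rho g a))"
  by (intro prob_space_PiM rho_prob)

lemma rc_base_distr:
  assumes g: "g > 0"
  shows "rc_base d g a L M = distr (count_space (Pow (ghost_edges d L M)) \<Otimes>\<^sub>M PiM (box d L M) (\<lambda>_. rho g a))
     (count_space (Pow (ghost_edges d L M)) \<Otimes>\<^sub>M PiM (box d L M) (\<lambda>_. rho g a))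
     (\<lambda>(\<omega>, \<phi>). (\<omega>, \<lambda>x\<in>box d L M. \<bar>\<phi> x\<bar>))"
proof -
  let ?cs = "count_space (Pow (ghost_edges d L M))"
  let ?P = "PiM (box d L M) (\<lambda>_. rho g a)"
  let ?T = "\<lambda>\<phi>. \<lambda>x\<in>box d L M. \<bar>\<phi> x\<bar>"
  have sf: "sigma_finite_measure (distr ?P ?P ?T)"
    by (intro prob_space_imp_sigma_finite prob_space.prob_space_distr prob_P g meas_abs)
  have "rc_base d g a L M = distr ?cs ?cs (\<lambda>x. x) \<Otimes>\<^sub>M distr ?P ?P ?T"
    unfolding rc_base_def PiM_abs[OF finite_box g] distr_id ..
  also have "\<dots> = distr (?cs \<Otimes>\<^sub>M ?P) (?cs \<Otimes>\<^sub>M ?P) (\<lambda>(x, y). (x, ?T y))"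
    by (rule pair_measure_distr[OF measurable_ident_sets[OF refl] meas_abs[OF g] sf])
  finally show ?thesis .
qed

lemma fubini_cs:
  assumes g: "g > 0" and f: "f \<in> borel_measurable (count_space (Pow (ghost_edges d L M)) \<Otimes>\<^sub>M PiM \<Lambda> (\<lambda>_. rho g a))"
  shows "integral\<^sup>N (count_space (Pow (ghost_edges d L M)) \<Otimes>\<^sub>M PiM \<Lambda> (\<lambda>_. rho g a)) f =
    (\<integral>\<^sup>+\<phi>. (\<Sum>\<omega>\<in>Pow (ghost_edges d L M). f (\<omega>, \<phi>)) \<partial>PiM \<Lambda> (\<lambda>_. rho g a))"
proof -
  let ?cs = "count_space (Pow (ghost_edges d L M))"
  let ?P = "PiM \<Lambda> (\<lambda>_. rho g a)"
  interpret sigma_finite_measure ?P by (intro prob_space_imp_sigma_finite prob_P g)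
  have "integral\<^sup>N (?cs \<Otimes>\<^sub>M ?P) f = (\<integral>\<^sup>+ x. \<integral>\<^sup>+ y. f (x, y) \<partial>?P \<partial>?cs)"
    by (rule nn_integral_fst[symmetric, OF f])
  also have "\<dots> = (\<Sum>\<omega>\<in>Pow (ghost_edges d L M). \<integral>\<^sup>+ y. f (\<omega>, y) \<partial>?P)"
    by (rule nn_integral_count_space_finite) (simp add: finite_ghost_edges)
  also have "\<dots> = (\<integral>\<^sup>+\<phi>. (\<Sum>\<omega>\<in>Pow (ghost_edges d L M). f (\<omega>, \<phi>)) \<partial>?P)"
    by (rule nn_integral_sum[symmetric]) (rule measurable_Pair2[OF f], simp)
  finally show ?thesis .
qed



lemma meas_sig:
  assumes g: "g > 0"
  shows "(\<lambda>\<phi>. \<lambda>x\<in>\<Lambda>. \<sigma> x * \<bar>\<phi> x\<bar>) \<in> PiM \<Lambda> (\<lambda>_. rho g a) \<rightarrow>\<^sub>M PiM \<Lambda> (\<lambda>_. rho g a)"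
proof (rule measurable_restrict)
  fix x assume x: "x \<in> \<Lambda>"
  have "measurable (PiM \<Lambda> (\<lambda>_. rho g a)) (rho g a) = measurable (PiM \<Lambda> (\<lambda>_. rho g a)) borel"
    by (rule measurable_cong_sets) simp_all
  moreover have "(\<lambda>\<phi>. \<sigma> x * \<bar>\<phi> x\<bar>) \<in> borel_measurable (PiM \<Lambda> (\<lambda>_. rho g a))"
    by (intro borel_measurable_times borel_measurable_const borel_measurable_abs meas_comp[OF sets_rho x])
  ultimately show "(\<lambda>\<phi>. \<sigma> x * \<bar>\<phi> x\<bar>) \<in> PiM \<Lambda> (\<lambda>_. rho g a) \<rightarrow>\<^sub>M rho g a" by simp
qed

lemma meas_sumsig:
  assumes g: "g > 0"
  shows "(\<lambda>\<phi>. \<Sum>\<sigma>\<in>S. Fint d \<Lambda> \<beta> h (\<lambda>x. \<sigma> x * \<bar>\<phi> x\<bar>)) \<in> borel_measurable (PiM \<Lambda> (\<lambda>_. rho g a))"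
proof (rule borel_measurable_sum)
  fix \<sigma>
  have "(\<lambda>\<phi>. Fint d \<Lambda> \<beta> h (\<lambda>x\<in>\<Lambda>. \<sigma> x * \<bar>\<phi> x\<bar>)) \<in> borel_measurable (PiM \<Lambda> (\<lambda>_. rho g a))"
    by (rule measurable_compose[OF meas_sig[OF g] meas_Fint[OF sets_rho]])
  moreover have "Fint d \<Lambda> \<beta> h (\<lambda>x\<in>\<Lambda>. \<sigma> x * \<bar>\<phi> x\<bar>) = Fint d \<Lambda> \<beta> h (\<lambda>x. \<sigma> x * \<bar>\<phi> x\<bar>)" for \<phi>
    by (rule Fint_cong) simp
  ultimately show "(\<lambda>\<phi>. Fint d \<Lambda> \<beta> h (\<lambda>x. \<sigma> x * \<bar>\<phi> x\<bar>)) \<in> borel_measurable (PiM \<Lambda> (\<lambda>_. rho g a))"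
    by simp
qed

lemma Z_formula:
  assumes g: "g > 0"
    and Q: "\<And>aa. 2 * (\<Sum>\<sigma>\<in>box d L M \<rightarrow>\<^sub>E {-1, 1::real}. Fint d (box d L M) \<beta> h (\<lambda>x. \<sigma> x * aa x)) = Q aa"
  shows "Z_phi4 d g a (box d L M) \<beta> h =
    enn2real (\<integral>\<^sup>+\<phi>. ennreal (Q (\<lambda>x. \<bar>\<phi> x\<bar>)) \<partial>PiM (box d L M) (\<lambda>_. rho g a)) / (2 ^ card (box d L M) * 2)"
proof -
  let ?\<Lambda> = "box d L M"
  let ?P = "PiM ?\<Lambda> (\<lambda>_. rho g a)"
  let ?S = "?\<Lambda> \<rightarrow>\<^sub>E {-1, 1::real}"
  define X where "X = (\<integral>\<^sup>+\<phi>. ennreal (Fint d ?\<Lambda> \<beta> h \<phi>) \<partial>?P)"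
  have Z: "Z_phi4 d g a ?\<Lambda> \<beta> h = enn2real X"
  proof -
    have "Z_phi4 d g a ?\<Lambda> \<beta> h = integral\<^sup>L ?P (Fint d ?\<Lambda> \<beta> h)"
      by (simp add: Z_phi4_def Fint_def[abs_def])
    also have "\<dots> = enn2real X" unfolding X_def
      by (rule integral_eq_nn_integral[OF meas_Fint[OF sets_rho]]) (simp add: Fint_nonneg)
    finally show ?thesis .
  qed
  have sym: "X * of_nat (2 ^ card ?\<Lambda>) = (\<integral>\<^sup>+\<phi>. ennreal (\<Sum>\<sigma>\<in>?S. Fint d ?\<Lambda> \<beta> h (\<lambda>x. \<sigma> x * \<bar>\<phi> x\<bar>)) \<partial>?P)"
    unfolding X_def by (rule symmetrize[OF g finite_box])
  have "(\<integral>\<^sup>+\<phi>. ennreal (Q (\<lambda>x. \<bar>\<phi> x\<bar>)) \<partial>?P)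
      = (\<integral>\<^sup>+\<phi>. ennreal (\<Sum>\<sigma>\<in>?S. Fint d ?\<Lambda> \<beta> h (\<lambda>x. \<sigma> x * \<bar>\<phi> x\<bar>)) * 2 \<partial>?P)"
  proof (rule nn_integral_cong)
    fix \<phi> :: "(nat \<Rightarrow> int) \<Rightarrow> real"
    have nn: "(\<Sum>\<sigma>\<in>?S. Fint d ?\<Lambda> \<beta> h (\<lambda>x. \<sigma> x * \<bar>\<phi> x\<bar>)) \<ge> 0" by (intro sum_nonneg Fint_nonneg)
    show "ennreal (Q (\<lambda>x. \<bar>\<phi> x\<bar>)) = ennreal (\<Sum>\<sigma>\<in>?S. Fint d ?\<Lambda> \<beta> h (\<lambda>x. \<sigma> x * \<bar>\<phi> x\<bar>)) * 2"
      unfolding Q[symmetric] using nn by (simp add: ennreal_mult'' mult.commute)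
  qed
  also have "\<dots> = (\<integral>\<^sup>+\<phi>. ennreal (\<Sum>\<sigma>\<in>?S. Fint d ?\<Lambda> \<beta> h (\<lambda>x. \<sigma> x * \<bar>\<phi> x\<bar>)) \<partial>?P) * 2"
    by (rule nn_integral_multc) (use meas_sumsig[OF g] in simp)
  also have "\<dots> = X * of_nat (2 ^ card ?\<Lambda>) * 2" unfolding sym ..
  finally have "enn2real (\<integral>\<^sup>+\<phi>. ennreal (Q (\<lambda>x. \<bar>\<phi> x\<bar>)) \<partial>?P) = enn2real X * (2 ^ card ?\<Lambda> * 2)"
    by (simp add: enn2real_mult ennreal_power[symmetric])
  then show ?thesis unfolding Z by simp
qed



abbreviation "CS d L M \<equiv> count_space (Pow (ghost_edges d L M))"
abbreviation "PP d g a L M \<equiv> PiM (box d L M) (\<lambda>_. rho g a)"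

lemma meas_rc_pair:
  assumes N: "sets N = sets (borel :: real measure)"
  shows "(\<lambda>(\<omega>, aa). rc_weight d L M \<beta> \<omega> aa) \<in> borel_measurable (CS d L M \<Otimes>\<^sub>M PiM (box d L M) (\<lambda>_. N))"
  by (rule measurable_pair_measure_countable1) (simp_all add: finite_ghost_edges meas_rc[OF N] countable_finite)

lemma meas_T:
  assumes g: "g > 0"
  shows "(\<lambda>(\<omega>, \<phi>). (\<omega>, \<lambda>x\<in>box d L M. \<bar>\<phi> x\<bar>)) \<in> (CS d L M \<Otimes>\<^sub>M PP d g a L M) \<rightarrow>\<^sub>M (CS d L M \<Otimes>\<^sub>M PP d g a L M)"
proof -
  have "(\<lambda>p. (fst p, (\<lambda>\<phi>. \<lambda>x\<in>box d L M. \<bar>\<phi> x\<bar>) (snd p))) \<in> (CS d L M \<Otimes>\<^sub>M PP d g a L M) \<rightarrow>\<^sub>M (CS d L M \<Otimes>\<^sub>M PP d g a L M)"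
    by (intro measurable_Pair measurable_fst measurable_compose[OF measurable_snd meas_abs[OF g]])
  then show ?thesis by (simp add: case_prod_beta')
qed

lemma meas_rc_abs:
  assumes g: "g > 0"
  shows "(\<lambda>\<phi>. rc_weight d L M \<beta> \<omega> (\<lambda>x. \<bar>\<phi> x\<bar>)) \<in> borel_measurable (PP d g a L M)"
proof -
  have "(\<lambda>\<phi>. rc_weight d L M \<beta> \<omega> (\<lambda>x\<in>box d L M. \<bar>\<phi> x\<bar>)) \<in> borel_measurable (PP d g a L M)"
    by (rule measurable_compose[OF meas_abs[OF g] meas_rc[OF sets_rho]])
  moreover have "rc_weight d L M \<beta> \<omega> (\<lambda>x\<in>box d L M. \<bar>\<phi> x\<bar>) = rc_weight d L M \<beta> \<omega> (\<lambda>x. \<bar>\<phi> x\<bar>)" for \<phi>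
    by (rule rc_weight_cong) simp
  ultimately show ?thesis by simp
qed

lemma C_formula:
  assumes g: "g > 0" and \<beta>: "\<beta> \<ge> 0"
  shows "(\<integral>(\<omega>', aa'). rc_weight d L M \<beta> \<omega>' aa' \<partial>(rc_base d g a L M)) =
    enn2real (\<integral>\<^sup>+\<phi>. ennreal (\<Sum>\<omega>\<in>Pow (ghost_edges d L M). rc_weight d L M \<beta> \<omega> (\<lambda>x. \<bar>\<phi> x\<bar>)) \<partial>PP d g a L M)"
proof -
  let ?B = "CS d L M \<Otimes>\<^sub>M PP d g a L M"
  let ?T = "\<lambda>(\<omega>, \<phi>). (\<omega>, \<lambda>x\<in>box d L M. \<bar>\<phi> x\<bar>)"
  let ?f = "\<lambda>(\<omega>', aa'). rc_weight d L M \<beta> \<omega>' aa'"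
  have fm: "?f \<in> borel_measurable ?B" by (rule meas_rc_pair[OF sets_rho])
  have "(\<integral>p. ?f p \<partial>(rc_base d g a L M)) = (\<integral>p. ?f p \<partial>(distr ?B ?B ?T))"
    unfolding rc_base_distr[OF g] ..
  also have "\<dots> = (\<integral>q. ?f (?T q) \<partial>?B)"
    by (rule integral_distr[OF meas_T[OF g] fm])
  also have "\<dots> = enn2real (\<integral>\<^sup>+q. ennreal (?f (?T q)) \<partial>?B)"
  proof (rule integral_eq_nn_integral)
    show "(\<lambda>q. ?f (?T q)) \<in> borel_measurable ?B" by (rule measurable_compose[OF meas_T[OF g] fm])
    show "AE q in ?B. 0 \<le> ?f (?T q)"
      by (rule AE_I2) (auto intro!: rc_weight_nonneg[OF \<beta>])
  qed
  also have "(\<integral>\<^sup>+q. ennreal (?f (?T q)) \<partial>?B) = (\<integral>\<^sup>+\<phi>. (\<Sum>\<omega>\<in>Pow (ghost_edges d L M). ennreal (?f (?T (\<omega>, \<phi>)))) \<partial>PP d g a L M)"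
    by (rule fubini_cs[OF g]) (use measurable_compose[OF meas_T[OF g] fm] in simp)
  also have "\<dots> = (\<integral>\<^sup>+\<phi>. ennreal (\<Sum>\<omega>\<in>Pow (ghost_edges d L M). rc_weight d L M \<beta> \<omega> (\<lambda>x. \<bar>\<phi> x\<bar>)) \<partial>PP d g a L M)"
  proof (rule nn_integral_cong)
    fix \<phi> :: "(nat \<Rightarrow> int) \<Rightarrow> real"
    have eq: "rc_weight d L M \<beta> \<omega> (\<lambda>x\<in>box d L M. \<bar>\<phi> x\<bar>) = rc_weight d L M \<beta> \<omega> (\<lambda>x. \<bar>\<phi> x\<bar>)" for \<omega>
      by (rule rc_weight_cong) simp
    have nn: "rc_weight d L M \<beta> \<omega> (\<lambda>x. \<bar>\<phi> x\<bar>) \<ge> 0" for \<omega>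
      by (rule rc_weight_nonneg[OF \<beta>]) simp
    show "(\<Sum>\<omega>\<in>Pow (ghost_edges d L M). ennreal (?f (?T (\<omega>, \<phi>)))) =
        ennreal (\<Sum>\<omega>\<in>Pow (ghost_edges d L M). rc_weight d L M \<beta> \<omega> (\<lambda>x. \<bar>\<phi> x\<bar>))"
      using nn by (simp add: eq)
  qed
  finally show ?thesis .
qed


lemma measure_formula:
  assumes g: "g > 0" and \<beta>: "\<beta> \<ge> 0"
  shows "measure (Psi0 d g a L M \<beta>) {p \<in> space (rc_base d g a L M). \<not> ghosts_connected (fst p)} =
    enn2real (\<integral>\<^sup>+\<phi>. ennreal (\<Sum>\<omega>\<in>Pow (ghost_edges d L M). if ghosts_connected \<omega> then 0 else rc_weight d L M \<beta> \<omega> (\<lambda>x. \<bar>\<phi> x\<bar>)) \<partial>PP d g a L M)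
    * (1 / (\<integral>(\<omega>', aa'). rc_weight d L M \<beta> \<omega>' aa' \<partial>(rc_base d g a L M)))"
proof -
  let ?B = "CS d L M \<Otimes>\<^sub>M PP d g a L M"
  let ?P = "PP d g a L M"
  let ?T = "\<lambda>(\<omega>, \<phi>). (\<omega>, \<lambda>x\<in>box d L M. \<bar>\<phi> x\<bar>)"
  let ?GE = "ghost_edges d L M"
  define C where "C = (\<integral>(\<omega>', aa'). rc_weight d L M \<beta> \<omega>' aa' \<partial>(rc_base d g a L M))"
  have C0: "C \<ge> 0" unfolding C_def C_formula[OF g \<beta>] by simp
  define D where "D = (\<lambda>(\<omega>, aa). ennreal (rc_weight d L M \<beta> \<omega> aa / C))"
  define ncw where "ncw \<omega> aa = (if ghosts_connected \<omega> then 0 else rc_weight d L M \<beta> \<omega> aa)" for \<omega> aa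
  define S where "S = {p \<in> space ?B. \<not> ghosts_connected (fst p)}"
  have rb: "rc_base d g a L M = distr ?B ?B ?T" by (rule rc_base_distr[OF g])
  have Psi: "Psi0 d g a L M \<beta> = density (distr ?B ?B ?T) D"
    unfolding Psi0_def D_def C_def rb ..
  have SS: "{p \<in> space (rc_base d g a L M). \<not> ghosts_connected (fst p)} = S"
    unfolding S_def rb by simp
  have em: "(\<lambda>r::real. ennreal (r / C)) \<in> borel \<rightarrow>\<^sub>M borel" by measurable
  have Dm: "D \<in> borel_measurable ?B"
    unfolding D_def
    by (rule measurable_pair_measure_countable1) (simp_all add: finite_ghost_edges countable_finite measurable_compose[OF meas_rc[OF sets_rho] em])
  have Sm: "S \<in> sets ?B"
  proof -
    have "S = fst -` {\<omega> \<in> Pow ?GE. \<not> ghosts_connected \<omega>} \<inter> space ?B"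
      by (auto simp: S_def space_pair_measure)
    also have "\<dots> \<in> sets ?B"
      by (rule measurable_sets[OF measurable_fst]) auto
    finally show ?thesis .
  qed
  have sd: "sets (distr ?B ?B ?T) = sets ?B" by simp
  have Dm': "D \<in> borel_measurable (distr ?B ?B ?T)"
    using Dm measurable_cong_sets[OF sd refl] by simp
  have Sm': "S \<in> sets (distr ?B ?B ?T)" using Sm by simp
  have DSm: "(\<lambda>p. D p * indicator S p) \<in> borel_measurable ?B"
    using Dm Sm by measurable
  have ncwm: "(\<lambda>\<phi>. ncw \<omega> (\<lambda>x\<in>box d L M. \<bar>\<phi> x\<bar>)) \<in> borel_measurable ?P" for \<omega>
    by (cases "ghosts_connected \<omega>") (simp_all add: ncw_def measurable_compose[OF meas_abs[OF g] meas_rc[OF sets_rho]])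
  have Fm: "(\<lambda>q. ennreal (ncw (fst q) (\<lambda>x\<in>box d L M. \<bar>snd q x\<bar>) / C)) \<in> borel_measurable ?B"
    by (rule measurable_pair_measure_countable1[where f="\<lambda>q. ennreal (ncw (fst q) (\<lambda>x\<in>box d L M. \<bar>snd q x\<bar>) / C)"]) (simp_all add: finite_ghost_edges countable_finite measurable_compose[OF ncwm em])
  have ncwm2: "(\<lambda>\<phi>. \<Sum>\<omega>\<in>Pow ?GE. ncw \<omega> (\<lambda>x. \<bar>\<phi> x\<bar>)) \<in> borel_measurable ?P"
  proof (rule borel_measurable_sum)
    fix \<omega>
    have "ncw \<omega> (\<lambda>x\<in>box d L M. \<bar>\<phi> x\<bar>) = ncw \<omega> (\<lambda>x. \<bar>\<phi> x\<bar>)" for \<phi>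
      unfolding ncw_def using rc_weight_cong[of d L M "\<lambda>x\<in>box d L M. \<bar>\<phi> x\<bar>" "\<lambda>x. \<bar>\<phi> x\<bar>" \<beta> \<omega>] by simp
    then show "(\<lambda>\<phi>. ncw \<omega> (\<lambda>x. \<bar>\<phi> x\<bar>)) \<in> borel_measurable ?P" using ncwm[of \<omega>] by simp
  qed
  have "emeasure (Psi0 d g a L M \<beta>) S = (\<integral>\<^sup>+ p. D p * indicator S p \<partial>(distr ?B ?B ?T))"
    unfolding Psi by (rule emeasure_density[OF Dm' Sm'])
  also have "\<dots> = (\<integral>\<^sup>+ q. D (?T q) * indicator S (?T q) \<partial>?B)"
    by (rule nn_integral_distr[OF meas_T[OF g]]) (use DSm measurable_cong_sets[OF sd refl] in simp)
  also have "\<dots> = (\<integral>\<^sup>+ q. ennreal (ncw (fst q) (\<lambda>x\<in>box d L M. \<bar>snd q x\<bar>) / C) \<partial>?B)"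
  proof (rule nn_integral_cong)
    fix q assume q: "q \<in> space ?B"
    then have Tq: "?T q \<in> space ?B" using measurable_space[OF meas_T[OF g]] by blast
    obtain \<omega> \<phi> where q': "q = (\<omega>, \<phi>)" by (cases q)
    show "D (?T q) * indicator S (?T q) = ennreal (ncw (fst q) (\<lambda>x\<in>box d L M. \<bar>snd q x\<bar>) / C)"
      using Tq by (auto simp: q' D_def S_def ncw_def indicator_def)
  qed
  also have "\<dots> = (\<integral>\<^sup>+\<phi>. (\<Sum>\<omega>\<in>Pow ?GE. ennreal (ncw \<omega> (\<lambda>x\<in>box d L M. \<bar>\<phi> x\<bar>) / C)) \<partial>?P)"
    using fubini_cs[OF g Fm] by simp
  also have "\<dots> = (\<integral>\<^sup>+\<phi>. ennreal (\<Sum>\<omega>\<in>Pow ?GE. ncw \<omega> (\<lambda>x. \<bar>\<phi> x\<bar>)) * ennreal (1 / C) \<partial>?P)"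
  proof (rule nn_integral_cong)
    fix \<phi> :: "(nat \<Rightarrow> int) \<Rightarrow> real"
    have eq: "ncw \<omega> (\<lambda>x\<in>box d L M. \<bar>\<phi> x\<bar>) = ncw \<omega> (\<lambda>x. \<bar>\<phi> x\<bar>)" for \<omega>
      unfolding ncw_def using rc_weight_cong[of d L M "\<lambda>x\<in>box d L M. \<bar>\<phi> x\<bar>" "\<lambda>x. \<bar>\<phi> x\<bar>" \<beta> \<omega>] by simp
    have nn: "ncw \<omega> (\<lambda>x. \<bar>\<phi> x\<bar>) \<ge> 0" for \<omega>
      unfolding ncw_def by (auto intro!: rc_weight_nonneg[OF \<beta>])
    have "(\<Sum>\<omega>\<in>Pow ?GE. ennreal (ncw \<omega> (\<lambda>x. \<bar>\<phi> x\<bar>) / C)) = ennreal (\<Sum>\<omega>\<in>Pow ?GE. ncw \<omega> (\<lambda>x. \<bar>\<phi> x\<bar>) / C)"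
      using nn C0 by (intro sum_ennreal) simp
    also have "\<dots> = ennreal ((\<Sum>\<omega>\<in>Pow ?GE. ncw \<omega> (\<lambda>x. \<bar>\<phi> x\<bar>)) * (1 / C))"
      by (simp add: sum_divide_distrib)
    also have "\<dots> = ennreal (\<Sum>\<omega>\<in>Pow ?GE. ncw \<omega> (\<lambda>x. \<bar>\<phi> x\<bar>)) * ennreal (1 / C)"
      using C0 nn by (intro ennreal_mult sum_nonneg) auto
    finally show "(\<Sum>\<omega>\<in>Pow ?GE. ennreal (ncw \<omega> (\<lambda>x\<in>box d L M. \<bar>\<phi> x\<bar>) / C)) =
        ennreal (\<Sum>\<omega>\<in>Pow ?GE. ncw \<omega> (\<lambda>x. \<bar>\<phi> x\<bar>)) * ennreal (1 / C)"
      by (simp add: eq)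
  qed
  also have "\<dots> = (\<integral>\<^sup>+\<phi>. ennreal (\<Sum>\<omega>\<in>Pow ?GE. ncw \<omega> (\<lambda>x. \<bar>\<phi> x\<bar>)) \<partial>?P) * ennreal (1 / C)"
    by (rule nn_integral_multc) (use ncwm2 in simp)
  finally have "measure (Psi0 d g a L M \<beta>) S =
      enn2real (\<integral>\<^sup>+\<phi>. ennreal (\<Sum>\<omega>\<in>Pow ?GE. ncw \<omega> (\<lambda>x. \<bar>\<phi> x\<bar>)) \<partial>?P) * (1 / C)"
    using C0 by (simp add: measure_def enn2real_mult)
  then show ?thesis unfolding SS C_def[symmetric] ncw_def .
qed



lemma Z_pair:
  fixes d L M :: nat and a g \<beta> :: real
  assumes g: "g > 0" and \<beta>: "\<beta> \<ge> 0"
  defines "Ntot \<equiv> (\<integral>\<^sup>+\<phi>. ennreal (\<Sum>\<omega>\<in>Pow (ghost_edges d L M). rc_weight d L M \<beta> \<omega> (\<lambda>x. \<bar>\<phi> x\<bar>)) \<partial>PP d g a L M)"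
    and "Nnc \<equiv> (\<integral>\<^sup>+\<phi>. ennreal (\<Sum>\<omega>\<in>Pow (ghost_edges d L M). if ghosts_connected \<omega> then 0 else rc_weight d L M \<beta> \<omega> (\<lambda>x. \<bar>\<phi> x\<bar>)) \<partial>PP d g a L M)"
    and "K \<equiv> (2 ^ card (box d L M) * 2 :: real)"
  shows "Z_pp d g a L M \<beta> = enn2real Ntot / K" "Z_pm d g a L M \<beta> = enn2real Nnc / K"
    "measure (Psi0 d g a L M \<beta>) {p \<in> space (rc_base d g a L M). \<not> ghosts_connected (fst p)} = enn2real Nnc * (1 / enn2real Ntot)"
    "Nnc \<le> Ntot"
proof -
  show "Z_pp d g a L M \<beta> = enn2real Ntot / K"
    unfolding Z_pp_def Ntot_def K_def by (rule Z_formula[OF g PW_pp])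
  show "Z_pm d g a L M \<beta> = enn2real Nnc / K"
    unfolding Z_pm_def Nnc_def K_def by (rule Z_formula[OF g PW_pm])
  show "measure (Psi0 d g a L M \<beta>) {p \<in> space (rc_base d g a L M). \<not> ghosts_connected (fst p)} = enn2real Nnc * (1 / enn2real Ntot)"
    unfolding Nnc_def Ntot_def measure_formula[OF g \<beta>] C_formula[OF g \<beta>] ..
  show "Nnc \<le> Ntot"
    unfolding Nnc_def Ntot_def
  proof (rule nn_integral_mono)
    fix \<phi> :: "(nat \<Rightarrow> int) \<Rightarrow> real"
    have nn: "rc_weight d L M \<beta> \<omega> (\<lambda>x. \<bar>\<phi> x\<bar>) \<ge> 0" for \<omega> by (rule rc_weight_nonneg[OF \<beta>]) simp
    have "(\<Sum>\<omega>\<in>Pow (ghost_edges d L M). if ghosts_connected \<omega> then 0 else rc_weight d L M \<beta> \<omega> (\<lambda>x. \<bar>\<phi> x\<bar>))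
        \<le> (\<Sum>\<omega>\<in>Pow (ghost_edges d L M). rc_weight d L M \<beta> \<omega> (\<lambda>x. \<bar>\<phi> x\<bar>))"
      using nn by (intro sum_mono) auto
    then show "ennreal (\<Sum>\<omega>\<in>Pow (ghost_edges d L M). if ghosts_connected \<omega> then 0 else rc_weight d L M \<beta> \<omega> (\<lambda>x. \<bar>\<phi> x\<bar>))
        \<le> ennreal (\<Sum>\<omega>\<in>Pow (ghost_edges d L M). rc_weight d L M \<beta> \<omega> (\<lambda>x. \<bar>\<phi> x\<bar>))"
      by (rule ennreal_leI)
  qed
qed

lemma ln_ratio_nonneg:
  fixes x y :: real
  assumes "0 \<le> y" "x = 0 \<or> y \<le> x"
  shows "0 \<le> ln (x / y)"
proof (cases "x = 0 \<or> y = 0")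
  case True then show ?thesis by auto
next
  case False
  then have "y \<le> x" "y > 0" using assms by auto
  then have "x / y \<ge> 1" by simp
  then show ?thesis by simp
qed

lemma term_nonneg:
  assumes g: "g > 0" and \<beta>: "\<beta> \<ge> 0"
  shows "0 \<le> ln (Z_pp d g a L M \<beta> / Z_pm d g a L M \<beta>)"
proof -
  let ?Ntot = "(\<integral>\<^sup>+\<phi>. ennreal (\<Sum>\<omega>\<in>Pow (ghost_edges d L M). rc_weight d L M \<beta> \<omega> (\<lambda>x. \<bar>\<phi> x\<bar>)) \<partial>PP d g a L M)"
  let ?Nnc = "(\<integral>\<^sup>+\<phi>. ennreal (\<Sum>\<omega>\<in>Pow (ghost_edges d L M). if ghosts_connected \<omega> then 0 else rc_weight d L M \<beta> \<omega> (\<lambda>x. \<bar>\<phi> x\<bar>)) \<partial>PP d g a L M)"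
  let ?K = "(2 ^ card (box d L M) * 2 :: real)"
  note Z = Z_pair[OF g \<beta>, where d=d and L=L and M=M and a=a]
  have K: "?K > 0" by simp
  have "Z_pp d g a L M \<beta> / Z_pm d g a L M \<beta> = enn2real ?Ntot / enn2real ?Nnc"
    unfolding Z(1,2) using K by (simp add: field_simps)
  moreover have "enn2real ?Ntot = 0 \<or> enn2real ?Nnc \<le> enn2real ?Ntot"
  proof (cases "?Ntot = \<top>")
    case True then show ?thesis by simp
  next
    case False
    then show ?thesis using Z(4) by (simp add: enn2real_mono top.not_eq_extremum)
  qed
  ultimately show ?thesis by (simp add: ln_ratio_nonneg)
qed

theorem lemma5p3:
  fixes d :: nat and g a :: real
  assumes "d \<ge> 2" and "g > 0"
  shows "(\<forall>\<beta>>0. \<forall>L M. L \<ge> 1 \<longrightarrow> M \<ge> 1 \<longrightarrow>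
            Z_pm d g a L M \<beta> / Z_pp d g a L M \<beta> =
            measure (Psi0 d g a L M \<beta>)
              {p \<in> space (rc_base d g a L M). \<not> ghosts_connected (fst p)})
       \<and> (\<forall>\<beta>>0. surface_tension d g a \<beta> \<ge> 0)"
proof (intro conjI allI impI)
  fix \<beta> :: real and L M :: nat assume \<beta>: "\<beta> > 0"
  note Z = Z_pair[OF assms(2) less_imp_le[OF \<beta>], where d=d and L=L and M=M and a=a]
  have K: "(2 ^ card (box d L M) * 2 :: real) > 0" by simp
  show "Z_pm d g a L M \<beta> / Z_pp d g a L M \<beta> =
            measure (Psi0 d g a L M \<beta>) {p \<in> space (rc_base d g a L M). \<not> ghosts_connected (fst p)}"
    unfolding Z(1,2,3) using K by (simp add: field_simps)
next
  fix \<beta> :: real assume \<beta>: "\<beta> > 0"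
  show "surface_tension d g a \<beta> \<ge> 0"
    unfolding surface_tension_def
  proof (intro Liminf_bounded always_eventually allI)
    fix L M :: nat
    have "0 \<le> 1 / real L ^ (d - 1) * ln (Z_pp d g a L M \<beta> / Z_pm d g a L M \<beta>)"
      using term_nonneg[OF assms(2) less_imp_le[OF \<beta>]] by simp
    then show "0 \<le> ereal (1 / real L ^ (d - 1) * ln (Z_pp d g a L M \<beta> / Z_pm d g a L M \<beta>))"
      by simp
  qed
qed


end
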